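(* Let $M$ be a linear SEM-UR satisfying SEM-UR faithfulness. Then every linear SEM-UR on the same observed variables whose mixing matrix equals $\mathbf W^{UR}(M)$ up to permutation and nonzero scaling of columns and which satisfies SEM-UR faithfulness has the same (unweighted) causal diagram as $M$, up to relabeling of the latent variables. Consequently, under separability and SEM-UR faithfulness, the structure of a linear SEM-UR is uniquely identifiable.
   Context: Linear SEM-UR: observed $X=(X_1,\dots,X_q)^\top$, latent $H=(H_1,\dots,H_l)^\top$, $H=N_H$, $X=\mathbf BH+\mathbf AX+N_X$, $\mathbf A$ strictly lower triangular, all noise terms mutually independent and nondegenerate. Causal diagram: DAG on $\mathcal H\cup\mathcal X$ with edge $H_i\to X_j$ iff $b_{ji}\neq0$ and $X_k\to X_j$ iff $a_{jk}\neq 0$. Mixing matrix $\mathbf W^{UR}=[(\mathbf I-\mathbf A)^{-1}\mathbf B\;\;(\mathbf I-\mathbf A)^{-1}]$, rows indexed by observed variables, columns by noise terms; its $(X_j,N_V)$ entry is the total causal effect of $V$ on $X_j$ (sum over directed paths of products of edge weights; $1$ if $V=X_j$). Separability: $\mathbf W^{UR}$ can be recovered from the distribution of $X$ up to column permutation and nonzero scaling. $Pa,Ch,De$: parents, children, descendants ($De(V)$ excludes $V$). $\mathrm{TC}(V,\mathcal V)$: vector of total causal effects of $V$ on the elements of $\mathcal V$. Possible children of $V_i$: $De(V_i)$ together with all latent $H\neq V_i$ with $Ch(H)\subseteq De(V_i)$. SEM-UR faithfulness: (a) the total causal effect of any observed or latent variable on any of its descendants is nonzero; (b1) for each variable $V_i$,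 $\mathrm{TC}(V_i,De(V_i))$ is not in the span of any $k\le|Ch(V_i)|$ vectors of $\{\mathrm{TC}(V,De(V_i)):V$ a possible child of $V_i\}$, except when $k=|Ch(V_i)|$ and every latent $H_l$ corresponding to one of these vectors has $Ch(H_l)\subseteq Ch(V_i)$; (b2) if $V_i$ is latent then for each child $X_j$ of $V_i$, $\mathrm{TC}(V_i,De(V_i)\setminus\{X_j\})$ is not in the span of any $k\le|Ch(X_j)\cup Ch(V_i)|-1$ vectors of $\{\mathrm{TC}(V,De(V_i)\setminus\{X_j\}):V$ a possible child of $X_j\}$, except when $k=|Ch(X_j)\cup Ch(V_i)|-1$ and every latent $H_l$ among them has $Ch(H_l)\subseteq Ch(X_j)\cup Ch(V_i)$. *)

theory Defs
  imports "Jordan_Normal_Form.Gauss_Jordan_Elimination"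
begin

text \<open>A linear SEM-UR with q observed variables X_0..X_(q-1) and l latent variables
  H_0..H_(l-1) is given by matrices A (q x q, strictly lower triangular) and B (q x l):
  H = N_H, X = B H + A X + N_X.  The noise distributions play no role in the
  structural statement and are not modelled.\<close>

datatype node = Lat nat | Obs nat

definition sem_ur :: "nat \<Rightarrow> nat \<Rightarrow> real mat \<Rightarrow> real mat \<Rightarrow> bool" where
  "sem_ur q l A B \<longleftrightarrow> A \<in> carrier_mat q q \<and> B \<in> carrier_mat q l \<and>
     (\<forall>j<q. \<forall>k<q. j \<le> k \<longrightarrow> A $$ (j, k) = 0)"

definition nodes :: "nat \<Rightarrow> nat \<Rightarrow> node set" where
  "nodes q l = Lat ` {..<l} \<union> Obs ` {..<q}"

definition edges :: "nat \<Rightarrow> nat \<Rightarrow> real mat \<Rightarrow> real mat \<Rightarrow> (node \<times> node) set" where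
  "edges q l A B =
     {(Lat i, Obs j) | i j. i < l \<and> j < q \<and> B $$ (j, i) \<noteq> 0} \<union>
     {(Obs k, Obs j) | k j. k < q \<and> j < q \<and> A $$ (j, k) \<noteq> 0}"

fun edge_weight :: "real mat \<Rightarrow> real mat \<Rightarrow> node \<Rightarrow> node \<Rightarrow> real" where
  "edge_weight A B (Lat i) (Obs j) = B $$ (j, i)"
| "edge_weight A B (Obs k) (Obs j) = A $$ (j, k)"
| "edge_weight A B _ _ = 0"

definition children :: "nat \<Rightarrow> nat \<Rightarrow> real mat \<Rightarrow> real mat \<Rightarrow> node \<Rightarrow> node set" where
  "children q l A B V = {W. (V, W) \<in> edges q l A B}"

definition descendants :: "nat \<Rightarrow> nat \<Rightarrow> real mat \<Rightarrow> real mat \<Rightarrow> node \<Rightarrow> node set" where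
  "descendants q l A B V = {W. (V, W) \<in> (edges q l A B)\<^sup>+}"

definition dir_paths :: "nat \<Rightarrow> nat \<Rightarrow> real mat \<Rightarrow> real mat \<Rightarrow> node \<Rightarrow> node \<Rightarrow> node list set" where
  "dir_paths q l A B u v = {p. p \<noteq> [] \<and> hd p = u \<and> last p = v \<and>
      (\<forall>i. Suc i < length p \<longrightarrow> (p ! i, p ! Suc i) \<in> edges q l A B)}"

definition path_weight :: "real mat \<Rightarrow> real mat \<Rightarrow> node list \<Rightarrow> real" where
  "path_weight A B p = (\<Prod>i<length p - 1. edge_weight A B (p ! i) (p ! Suc i))"

definition total_effect :: "nat \<Rightarrow> nat \<Rightarrow> real mat \<Rightarrow> real mat \<Rightarrow> node \<Rightarrow> node \<Rightarrow> real" where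
  "total_effect q l A B u v = (\<Sum>p\<in>dir_paths q l A B u v. path_weight A B p)"

text \<open>Mixing matrix W^UR = [(I - A)^-1 B, (I - A)^-1]: q rows, l + q columns; column i < l
  corresponds to N_(H_i), column l + k to N_(X_k).\<close>
definition mixing_matrix :: "nat \<Rightarrow> nat \<Rightarrow> real mat \<Rightarrow> real mat \<Rightarrow> real mat" where
  "mixing_matrix q l A B =
     (let T = the (mat_inverse (1\<^sub>m q - A)) in
      mat q (l + q) (\<lambda>(j, c). if c < l then (T * B) $$ (j, c) else T $$ (j, c - l)))"

definition equal_up_to_perm_scaling :: "real mat \<Rightarrow> real mat \<Rightarrow> bool" where
  "equal_up_to_perm_scaling W' W \<longleftrightarrow> dim_row W' = dim_row W \<and>
     (\<exists>\<sigma> c. bij_betw \<sigma> {..<dim_col W'} {..<dim_col W} \<and>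
        (\<forall>k<dim_col W'. c k \<noteq> (0::real)) \<and>
        (\<forall>j<dim_row W'. \<forall>k<dim_col W'. W' $$ (j, k) = c k * W $$ (j, \<sigma> k)))"

definition possible_children :: "nat \<Rightarrow> nat \<Rightarrow> real mat \<Rightarrow> real mat \<Rightarrow> node \<Rightarrow> node set" where
  "possible_children q l A B V = descendants q l A B V \<union>
     {Lat h | h. h < l \<and> Lat h \<noteq> V \<and> children q l A B (Lat h) \<subseteq> descendants q l A B V}"

definition TC_in_span :: "nat \<Rightarrow> nat \<Rightarrow> real mat \<Rightarrow> real mat \<Rightarrow> node \<Rightarrow> node set \<Rightarrow> node set \<Rightarrow> bool" where
  "TC_in_span q l A B V D S \<longleftrightarrow>
     (\<exists>c. \<forall>X\<in>D. total_effect q l A B V X = (\<Sum>U\<in>S. c U * total_effect q l A B U X))"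

definition is_latent :: "node \<Rightarrow> bool" where
  "is_latent V \<longleftrightarrow> (\<exists>h. V = Lat h)"

definition sem_ur_faithful :: "nat \<Rightarrow> nat \<Rightarrow> real mat \<Rightarrow> real mat \<Rightarrow> bool" where
  "sem_ur_faithful q l A B \<longleftrightarrow>
     \<comment> \<open>(a)\<close>
     (\<forall>V\<in>nodes q l. \<forall>X\<in>descendants q l A B V. total_effect q l A B V X \<noteq> 0) \<and>
     \<comment> \<open>(b1)\<close>
     (\<forall>V\<in>nodes q l. \<forall>S. S \<subseteq> possible_children q l A B V \<longrightarrow>
        card S \<le> card (children q l A B V) \<longrightarrow>
        TC_in_span q l A B V (descendants q l A B V) S \<longrightarrow>
        card S = card (children q l A B V) \<and>
        (\<forall>U\<in>S. is_latent U \<longrightarrow> children q l A B U \<subseteq> children q l A B V)) \<and>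
     \<comment> \<open>(b2)\<close>
     (\<forall>V\<in>nodes q l. is_latent V \<longrightarrow> (\<forall>X\<in>children q l A B V. \<forall>S.
        S \<subseteq> possible_children q l A B X \<longrightarrow>
        card S \<le> card (children q l A B X \<union> children q l A B V) - 1 \<longrightarrow>
        TC_in_span q l A B V (descendants q l A B V - {X}) S \<longrightarrow>
        card S = card (children q l A B X \<union> children q l A B V) - 1 \<and>
        (\<forall>U\<in>S. is_latent U \<longrightarrow>
           children q l A B U \<subseteq> children q l A B X \<union> children q l A B V)))"

fun relabel :: "(nat \<Rightarrow> nat) \<Rightarrow> node \<Rightarrow> node" where
  "relabel \<pi> (Lat i) = Lat (\<pi> i)"
| "relabel \<pi> (Obs j) = Obs j"

end

theory Submission
  imports Defs "Jordan_Normal_Form.Determinant"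
begin


fun rank :: "node \<Rightarrow> nat" where
  "rank (Lat i) = 0" | "rank (Obs j) = Suc j"

lemma chain_Cons:
  assumes "p \<noteq> []"
  shows "(\<forall>i. Suc i < length (u#p) \<longrightarrow> ((u#p)!i, (u#p)!Suc i) \<in> R) \<longleftrightarrow>
         (u, hd p) \<in> R \<and> (\<forall>i. Suc i < length p \<longrightarrow> (p!i, p!Suc i) \<in> R)"
proof
  assume H: "\<forall>i. Suc i < length (u#p) \<longrightarrow> ((u#p)!i, (u#p)!Suc i) \<in> R"
  from H[rule_format, of 0] assms have "(u, hd p) \<in> R" by (simp add: hd_conv_nth)
  moreover have "\<forall>i. Suc i < length p \<longrightarrow> (p!i, p!Suc i) \<in> R"
  proof (intro allI impI)
    fix i assume "Suc i < length p"
    then show "(p!i, p!Suc i) \<in> R" using H[rule_format, of "Suc i"] by simp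
  qed
  ultimately show "(u, hd p) \<in> R \<and> (\<forall>i. Suc i < length p \<longrightarrow> (p!i, p!Suc i) \<in> R)" by blast
next
  assume H: "(u, hd p) \<in> R \<and> (\<forall>i. Suc i < length p \<longrightarrow> (p!i, p!Suc i) \<in> R)"
  show "\<forall>i. Suc i < length (u#p) \<longrightarrow> ((u#p)!i, (u#p)!Suc i) \<in> R"
  proof (intro allI impI)
    fix i assume "Suc i < length (u#p)"
    then show "((u#p)!i, (u#p)!Suc i) \<in> R" using H assms by (cases i) (auto simp: hd_conv_nth)
  qed
qed

locale model =
  fixes q l :: nat and A B :: "real mat"
  assumes sem: "sem_ur q l A B"
    and faith: "sem_ur_faithful q l A B"
begin

abbreviation "EE \<equiv> edges q l A B"
abbreviation "CH \<equiv> children q l A B"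
abbreviation "DE \<equiv> descendants q l A B"
abbreviation "TT \<equiv> total_effect q l A B"
abbreviation "NN \<equiv> nodes q l"
abbreviation "ew \<equiv> edge_weight A B"
abbreviation "PC \<equiv> possible_children q l A B"

definition dset :: "node \<Rightarrow> nat set" where "dset V = {j. Obs j \<in> DE V}"
definition supp :: "node \<Rightarrow> nat set" where "supp V = {j. j < q \<and> TT V (Obs j) \<noteq> 0}"

lemma A_low: "j < q \<Longrightarrow> k < q \<Longrightarrow> A $$ (j,k) \<noteq> 0 \<Longrightarrow> k < j"
  using sem unfolding sem_ur_def by (meson not_le)

lemma E_cases: "(u,v) \<in> EE \<Longrightarrow> (\<exists>i j. u = Lat i \<and> v = Obs j \<and> i<l \<and> j<q \<and> B$$(j,i) \<noteq> 0) \<or>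
   (\<exists>k j. u = Obs k \<and> v = Obs j \<and> k<q \<and> j<q \<and> k<j \<and> A$$(j,k)\<noteq>0)"
  unfolding edges_def using A_low by blast

lemma E_rank: "(u,v) \<in> EE \<Longrightarrow> rank u < rank v" by (auto dest!: E_cases)
lemma E_ew: "(u,v) \<in> EE \<Longrightarrow> ew u v \<noteq> 0" by (auto dest!: E_cases)
lemma E_obs: "(u,v) \<in> EE \<Longrightarrow> \<exists>j<q. v = Obs j" by (auto dest!: E_cases)
lemma E_rank_le: "(u,v) \<in> EE \<Longrightarrow> rank v \<le> q" by (auto dest!: E_cases)
lemma E_nodes: "(u,v) \<in> EE \<Longrightarrow> u \<in> NN \<and> v \<in> NN" unfolding nodes_def by (auto dest!: E_cases)

lemma trancl_rank: "(u,v) \<in> EE\<^sup>+ \<Longrightarrow> rank u < rank v"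
  by (induct rule: trancl_induct) (auto dest: E_rank)
lemma rtrancl_rank: "(u,v) \<in> EE\<^sup>* \<Longrightarrow> rank u \<le> rank v"
  by (induct rule: rtrancl_induct) (auto dest: E_rank)
lemma trancl_obs: "(u,v) \<in> EE\<^sup>+ \<Longrightarrow> \<exists>j<q. v = Obs j"
  by (induct rule: trancl_induct) (auto dest: E_obs)

lemma Ch_De: "CH V \<subseteq> DE V" unfolding children_def descendants_def by auto
lemma Ch_sub: "CH V \<subseteq> Obs ` {..<q}" unfolding children_def by (auto dest!: E_obs)
lemma finite_Ch: "finite (CH V)" using Ch_sub finite_subset by blast
lemma De_sub: "DE V \<subseteq> Obs ` {..<q}" unfolding descendants_def by (auto dest!: trancl_obs)
lemma Ch_rank: "c \<in> CH u \<Longrightarrow> rank u < rank c \<and> rank c \<le> q"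
  unfolding children_def using E_rank E_rank_le by auto
lemma Ch_ew: "c \<in> CH u \<Longrightarrow> ew u c \<noteq> 0" unfolding children_def using E_ew by auto
lemma De_trans: "X \<in> DE V \<Longrightarrow> Y \<in> DE X \<Longrightarrow> Y \<in> DE V"
  unfolding descendants_def by auto
lemma De_not_self: "V \<notin> DE V" unfolding descendants_def using trancl_rank by blast
lemma Ch_not_Lat: "Lat h \<notin> CH V" using Ch_sub by auto
lemma nodes_Obs: "j < q \<Longrightarrow> Obs j \<in> NN" unfolding nodes_def by auto
lemma nodes_Lat: "Lat h \<in> NN \<longleftrightarrow> h < l" unfolding nodes_def by auto
lemma nodes_Obs_iff: "Obs j \<in> NN \<longleftrightarrow> j < q" unfolding nodes_def by auto
lemma finite_nodes: "finite NN" unfolding nodes_def by auto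

lemma dp_decomp: "dir_paths q l A B u v = (if u = v then {[u]} else {}) \<union> (\<Union>c\<in>CH u. (#) u ` dir_paths q l A B c v)"
proof (rule Set.set_eqI, rule iffI)
  fix p assume "p \<in> dir_paths q l A B u v"
  then have p: "p \<noteq> []" "hd p = u" "last p = v" "\<forall>i. Suc i < length p \<longrightarrow> (p!i, p!Suc i) \<in> EE"
    unfolding dir_paths_def by auto
  then obtain r where pr: "p = u # r" by (cases p) auto
  show "p \<in> (if u = v then {[u]} else {}) \<union> (\<Union>c\<in>CH u. (#) u ` dir_paths q l A B c v)"
  proof (cases "r = []")
    case True then show ?thesis using p pr by auto
  next
    case False
    have "(u, hd r) \<in> EE" "\<forall>i. Suc i < length r \<longrightarrow> (r!i, r!Suc i) \<in> EE"
      using p(4) chain_Cons[OF False] pr by auto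
    moreover have "last r = v" using p(3) pr False by simp
    ultimately have "r \<in> dir_paths q l A B (hd r) v" "hd r \<in> CH u"
      unfolding dir_paths_def children_def using False by auto
    then show ?thesis using pr by blast
  qed
next
  fix p assume "p \<in> (if u = v then {[u]} else {}) \<union> (\<Union>c\<in>CH u. (#) u ` dir_paths q l A B c v)"
  then show "p \<in> dir_paths q l A B u v"
  proof
    assume "p \<in> (if u = v then {[u]} else {})" then show ?thesis by (auto simp: dir_paths_def split: if_splits)
  next
    assume "p \<in> (\<Union>c\<in>CH u. (#) u ` dir_paths q l A B c v)"
    then obtain c r where cr: "c \<in> CH u" "r \<in> dir_paths q l A B c v" "p = u # r" by auto
    then have "r \<noteq> []" "hd r = c" "last r = v" "\<forall>i. Suc i < length r \<longrightarrow> (r!i, r!Suc i) \<in> EE"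
      unfolding dir_paths_def by auto
    then show ?thesis using cr chain_Cons[of r u EE] unfolding dir_paths_def children_def by auto
  qed
qed

lemma finite_dp: "finite (dir_paths q l A B u v)"
proof (induct u rule: measure_induct_rule[where f = "\<lambda>u. Suc q - rank u"])
  case (less u)
  have "\<forall>c\<in>CH u. finite (dir_paths q l A B c v)"
  proof
    fix c assume c: "c \<in> CH u"
    then have "rank u < rank c" "rank c \<le> q" using Ch_rank by auto
    then show "finite (dir_paths q l A B c v)" by (intro less) auto
  qed
  then show ?case by (subst dp_decomp) (auto simp: finite_Ch)
qed

lemma pw_Cons: assumes "r \<noteq> []"
  shows "path_weight A B (u # r) = ew u (hd r) * path_weight A B r"
proof -
  obtain n where n: "length r = Suc n" using assms by (cases r) auto
  have "path_weight A B (u#r) = (\<Prod>i<Suc n. ew ((u#r)!i) ((u#r)!Suc i))" by (simp add: path_weight_def n)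
  also have "\<dots> = ew u (r!0) * (\<Prod>i<n. ew (r!i) (r!Suc i))" by (subst prod.lessThan_Suc_shift) simp
  also have "\<dots> = ew u (hd r) * path_weight A B r" using assms n by (simp add: path_weight_def hd_conv_nth)
  finally show ?thesis .
qed

lemma TE_decomp: "TT u v = (if u = v then 1 else 0) + (\<Sum>c\<in>CH u. ew u c * TT c v)"
proof -
  let ?P = "\<lambda>c. (#) u ` dir_paths q l A B c v"
  let ?S1 = "(if u = v then {[u]} else {}) :: node list set"
  have fin: "\<forall>c\<in>CH u. finite (?P c)" using finite_dp by auto
  have disj1: "?S1 \<inter> (\<Union>c\<in>CH u. ?P c) = {}" by (auto simp: dir_paths_def)
  have "TT u v = sum (path_weight A B) ?S1 + sum (path_weight A B) (\<Union>c\<in>CH u. ?P c)"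
    unfolding total_effect_def by (subst dp_decomp, rule sum.union_disjoint) (use disj1 fin finite_Ch in auto)
  also have "sum (path_weight A B) ?S1 = (if u = v then 1 else 0)" by (simp add: path_weight_def)
  also have "sum (path_weight A B) (\<Union>c\<in>CH u. ?P c) = (\<Sum>c\<in>CH u. sum (path_weight A B) (?P c))"
  proof (rule sum.UNION_disjoint)
    show "finite (CH u)" by (rule finite_Ch)
    show "\<forall>c\<in>CH u. finite (?P c)" by (rule fin)
    show "\<forall>c\<in>CH u. \<forall>d\<in>CH u. c \<noteq> d \<longrightarrow> ?P c \<inter> ?P d = {}" by (auto simp: dir_paths_def)
  qed
  also have "\<dots> = (\<Sum>c\<in>CH u. ew u c * TT c v)"
  proof (rule sum.cong[OF refl])
    fix c assume "c \<in> CH u"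
    have "sum (path_weight A B) (?P c) = (\<Sum>r\<in>dir_paths q l A B c v. path_weight A B (u # r))"
      by (subst sum.reindex) (auto simp: inj_on_def)
    also have "\<dots> = (\<Sum>r\<in>dir_paths q l A B c v. ew u c * path_weight A B r)"
      by (rule sum.cong[OF refl]) (auto simp: dir_paths_def pw_Cons)
    also have "\<dots> = ew u c * TT c v" by (simp add: total_effect_def sum_distrib_left)
    finally show "sum (path_weight A B) (?P c) = ew u c * TT c v" .
  qed
  finally show ?thesis .
qed

lemma TE_nz_rtrancl: "TT u v \<noteq> 0 \<Longrightarrow> (u,v) \<in> EE\<^sup>*"
proof (induct u rule: measure_induct_rule[where f = "\<lambda>u. Suc q - rank u"])
  case (less u)
  show ?case
  proof (cases "u = v")
    case True then show ?thesis by simp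
  next
    case False
    with less(2) TE_decomp[of u v] have "(\<Sum>c\<in>CH u. ew u c * TT c v) \<noteq> 0" by simp
    then obtain c where c: "c \<in> CH u" "ew u c * TT c v \<noteq> 0" using sum.not_neutral_contains_not_neutral by blast
    then have "rank u < rank c" "rank c \<le> q" using Ch_rank by auto
    then have "(c,v) \<in> EE\<^sup>*" using c by (intro less) auto
    moreover have "(u,c) \<in> EE" using c by (simp add: children_def)
    ultimately show ?thesis by (meson converse_rtrancl_into_rtrancl)
  qed
qed

lemma TE_self: "TT u u = 1"
proof -
  have "(\<Sum>c\<in>CH u. ew u c * TT c u) = 0"
  proof (rule sum.neutral, rule ballI)
    fix c assume c: "c \<in> CH u"
    have "TT c u = 0"
    proof (rule ccontr)
      assume "TT c u \<noteq> 0"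
      then have "rank c \<le> rank u" using TE_nz_rtrancl rtrancl_rank by blast
      then show False using Ch_rank[OF c] by simp
    qed
    then show "ew u c * TT c u = 0" by simp
  qed
  then show ?thesis using TE_decomp[of u u] by simp
qed

lemma TE_vec: "u \<noteq> v \<Longrightarrow> TT u v = (\<Sum>c\<in>CH u. ew u c * TT c v)"
  using TE_decomp[of u v] by simp

lemma faith_a: "V \<in> NN \<Longrightarrow> X \<in> DE V \<Longrightarrow> TT V X \<noteq> 0"
proof -
  assume "V \<in> NN" "X \<in> DE V"
  moreover have "\<forall>V\<in>NN. \<forall>X\<in>DE V. TT V X \<noteq> 0"
    using faith unfolding sem_ur_faithful_def by (rule conjunct1)
  ultimately show ?thesis by blast
qed

lemma TE_nz_iff: "V \<in> NN \<Longrightarrow> TT V (Obs j) \<noteq> 0 \<longleftrightarrow> V = Obs j \<or> Obs j \<in> DE V"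
proof
  assume "TT V (Obs j) \<noteq> 0"
  then have "(V, Obs j) \<in> EE\<^sup>*" by (rule TE_nz_rtrancl)
  then show "V = Obs j \<or> Obs j \<in> DE V" unfolding descendants_def by (auto simp: rtrancl_eq_or_trancl)
next
  assume "V \<in> NN" "V = Obs j \<or> Obs j \<in> DE V"
  then show "TT V (Obs j) \<noteq> 0" using TE_self faith_a by auto
qed

lemma TE_Obs_zero: "k < j \<Longrightarrow> TT (Obs j) (Obs k) = 0"
proof (rule ccontr)
  assume "k < j" "TT (Obs j) (Obs k) \<noteq> 0"
  then have "rank (Obs j) \<le> rank (Obs k)" using TE_nz_rtrancl rtrancl_rank by blast
  then show False using \<open>k < j\<close> by simp
qed

lemma dset_sub: "dset V \<subseteq> {..<q}" unfolding dset_def using De_sub by auto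

lemma supp_eq: "V \<in> NN \<Longrightarrow> supp V = {j. j < q \<and> V = Obs j} \<union> dset V"
  unfolding supp_def dset_def using TE_nz_iff De_sub by auto

lemma supp_Lat: "Lat h \<in> NN \<Longrightarrow> supp (Lat h) = dset (Lat h)"
  using supp_eq by auto

lemma dset_Obs_gt: "j \<in> dset (Obs k) \<Longrightarrow> k < j"
  unfolding dset_def descendants_def using trancl_rank by fastforce

lemma supp_Obs: "k < q \<Longrightarrow> supp (Obs k) = insert k (dset (Obs k))"
  using supp_eq[of "Obs k"] nodes_Obs by auto

lemma Min_supp_Obs: "k < q \<Longrightarrow> Min (supp (Obs k)) = k"
proof -
  assume k: "k < q"
  have f: "finite (supp (Obs k))" unfolding supp_def by auto
  show ?thesis using supp_Obs[OF k] dset_Obs_gt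
    by (intro Min_eqI f) (auto simp: less_imp_le)
qed

lemma supp_mono: "V \<in> NN \<Longrightarrow> k \<in> supp V \<Longrightarrow> supp (Obs k) \<subseteq> supp V"
proof -
  assume V: "V \<in> NN" and k: "k \<in> supp V"
  then have kq: "k < q" unfolding supp_def by simp
  have "k \<in> {j. j<q \<and> V = Obs j} \<union> dset V" using k supp_eq[OF V] by simp
  then have "V = Obs k \<or> k \<in> dset V" by blast
  then show ?thesis
  proof
    assume "V = Obs k" then show ?thesis by simp
  next
    assume kd0: "k \<in> dset V"
    then have kd: "Obs k \<in> DE V" by (simp add: dset_def)
    have "dset (Obs k) \<subseteq> dset V" using De_trans kd unfolding dset_def by blast
    then have "supp (Obs k) \<subseteq> dset V" using supp_Obs[OF kq] kd0 by simp
    moreover have "dset V \<subseteq> supp V" using supp_eq[OF V] by simp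
    ultimately show ?thesis by (rule order_trans)
  qed
qed

lemma De_supp: "V \<in> NN \<Longrightarrow> c \<in> DE V \<Longrightarrow> supp c \<subseteq> dset V"
proof -
  assume V: "V \<in> NN" and c: "c \<in> DE V"
  then obtain j where j: "j < q" "c = Obs j" using De_sub by auto
  have "j \<in> dset V" using c j by (simp add: dset_def)
  moreover have "dset c \<subseteq> dset V" using De_trans c unfolding dset_def by blast
  ultimately show ?thesis using supp_Obs[OF j(1)] unfolding j(2) by simp
qed

lemma first_step: "(u,v) \<in> EE\<^sup>+ \<Longrightarrow> \<exists>c. (u,c) \<in> EE \<and> (c = v \<or> (c,v) \<in> EE\<^sup>+)"
  by (metis rtrancl_eq_or_trancl tranclD)

lemma Min_Lat_child:
  assumes H: "Lat h \<in> NN" and ne: "dset (Lat h) \<noteq> {}"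
  shows "Obs (Min (dset (Lat h))) \<in> CH (Lat h)"
proof -
  let ?m = "Min (dset (Lat h))"
  have fin: "finite (dset (Lat h))" using dset_sub finite_subset by blast
  have m: "?m \<in> dset (Lat h)" using Min_in[OF fin ne] .
  have minle: "\<And>j. j \<in> dset (Lat h) \<Longrightarrow> ?m \<le> j" using fin by simp
  from m have "(Lat h, Obs ?m) \<in> EE\<^sup>+" by (simp add: dset_def descendants_def)
  then obtain c where c: "(Lat h, c) \<in> EE" "c = Obs ?m \<or> (c, Obs ?m) \<in> EE\<^sup>+"
    using first_step by blast
  show ?thesis
  proof (cases "c = Obs ?m")
    case True then show ?thesis using c by (simp add: children_def)
  next
    case False
    then have tc: "(c, Obs ?m) \<in> EE\<^sup>+" using c by blast
    obtain j where j: "c = Obs j" using E_obs c(1) by blast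
    have "j \<in> dset (Lat h)" using c(1) j by (simp add: dset_def descendants_def)
    then have "?m \<le> j" by (rule minle)
    moreover have "rank c < rank (Obs ?m)" using tc trancl_rank by blast
    ultimately show ?thesis using j by simp
  qed
qed

lemma Min_supp:
  assumes U: "U \<in> NN" and ne: "supp U \<noteq> {}"
  shows "U = Obs (Min (supp U)) \<or> (is_latent U \<and> Obs (Min (supp U)) \<in> CH U)"
proof (cases U)
  case (Lat h)
  then have "supp U = dset (Lat h)" using U supp_Lat by simp
  then show ?thesis using Min_Lat_child[of h] U ne Lat by (simp add: is_latent_def)
next
  case (Obs k)
  then have "k < q" using U nodes_Obs_iff by simp
  then show ?thesis using Min_supp_Obs Obs by simp
qed

lemma Lat_dset_sub: "CH (Lat h) \<subseteq> DE V \<Longrightarrow> dset (Lat h) \<subseteq> dset V"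
proof
  fix j assume h: "CH (Lat h) \<subseteq> DE V" and "j \<in> dset (Lat h)"
  then have "(Lat h, Obs j) \<in> EE\<^sup>+" by (simp add: dset_def descendants_def)
  then obtain c where c: "(Lat h, c) \<in> EE" "c = Obs j \<or> (c, Obs j) \<in> EE\<^sup>+"
    using first_step by blast
  have cD: "c \<in> DE V" using c(1) h by (auto simp: children_def)
  show "j \<in> dset V"
  proof (cases "c = Obs j")
    case True then show ?thesis using cD by (simp add: dset_def)
  next
    case False
    then have "Obs j \<in> DE c" using c by (simp add: descendants_def)
    then show ?thesis using cD De_trans by (simp add: dset_def)
  qed
qed

lemma PC_char: "V \<in> NN \<Longrightarrow> PC V = {U \<in> NN. U \<noteq> V \<and> supp U \<subseteq> dset V}"
proof (intro Set.set_eqI iffI)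
  fix U assume V: "V \<in> NN" and U: "U \<in> PC V"
  show "U \<in> {U \<in> NN. U \<noteq> V \<and> supp U \<subseteq> dset V}"
  proof (cases "U \<in> DE V")
    case True
    then obtain j where j: "j<q" "U = Obs j" using De_sub by auto
    have "U \<noteq> V" using True De_not_self by blast
    moreover have "U \<in> NN" using j nodes_Obs by simp
    ultimately show ?thesis using De_supp[OF V True] by simp
  next
    case False
    with U obtain h where h: "U = Lat h" "h < l" "Lat h \<noteq> V" "CH (Lat h) \<subseteq> DE V"
      unfolding possible_children_def by auto
    have "dset (Lat h) \<subseteq> dset V" using h(4) by (rule Lat_dset_sub)
    moreover have "supp (Lat h) = dset (Lat h)" using h(2) supp_Lat nodes_Lat by simp
    ultimately show ?thesis using h nodes_Lat by simp
  qed
next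
  fix U assume V: "V \<in> NN" and U: "U \<in> {U \<in> NN. U \<noteq> V \<and> supp U \<subseteq> dset V}"
  show "U \<in> PC V"
  proof (cases U)
    case (Obs j)
    then have jq: "j < q" using U nodes_Obs_iff by simp
    then have "j \<in> supp U" using Obs supp_Obs by simp
    then have "U \<in> DE V" using U Obs by (auto simp: dset_def)
    then show ?thesis by (simp add: possible_children_def)
  next
    case (Lat h)
    have "CH (Lat h) \<subseteq> DE V"
    proof
      fix c assume c: "c \<in> CH (Lat h)"
      then obtain j where j: "j<q" "c = Obs j" using Ch_sub by auto
      have "c \<in> DE (Lat h)" using c Ch_De by blast
      then have "TT (Lat h) c \<noteq> 0" using faith_a U Lat by blast
      then have "j \<in> supp U" using Lat j by (simp add: supp_def)
      then show "c \<in> DE V" using U j by (auto simp: dset_def)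
    qed
    then show ?thesis using U Lat nodes_Lat by (auto simp: possible_children_def)
  qed
qed

end


context model begin

lemma faith_b1: "V \<in> NN \<Longrightarrow> S \<subseteq> PC V \<Longrightarrow> card S \<le> card (CH V) \<Longrightarrow> TC_in_span q l A B V (DE V) S \<Longrightarrow>
   card S = card (CH V) \<and> (\<forall>U\<in>S. is_latent U \<longrightarrow> CH U \<subseteq> CH V)"
proof -
  assume a: "V \<in> NN" "S \<subseteq> PC V" "card S \<le> card (CH V)" "TC_in_span q l A B V (DE V) S"
  have "\<forall>V\<in>NN. \<forall>S. S \<subseteq> PC V \<longrightarrow> card S \<le> card (CH V) \<longrightarrow> TC_in_span q l A B V (DE V) S \<longrightarrow>
        card S = card (CH V) \<and> (\<forall>U\<in>S. is_latent U \<longrightarrow> CH U \<subseteq> CH V)"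
    using faith unfolding sem_ur_faithful_def by (rule conjunct1[OF conjunct2])
  then show ?thesis using a by blast
qed

lemma faith_b2: "V \<in> NN \<Longrightarrow> is_latent V \<Longrightarrow> X \<in> CH V \<Longrightarrow> S \<subseteq> PC X \<Longrightarrow>
   card S \<le> card (CH X \<union> CH V) - 1 \<Longrightarrow> TC_in_span q l A B V (DE V - {X}) S \<Longrightarrow>
   card S = card (CH X \<union> CH V) - 1"
proof -
  assume a: "V \<in> NN" "is_latent V" "X \<in> CH V" "S \<subseteq> PC X" "card S \<le> card (CH X \<union> CH V) - 1"
     "TC_in_span q l A B V (DE V - {X}) S"
  have "\<forall>V\<in>NN. is_latent V \<longrightarrow> (\<forall>X\<in>CH V. \<forall>S.
        S \<subseteq> PC X \<longrightarrow>
        card S \<le> card (CH X \<union> CH V) - 1 \<longrightarrow>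
        TC_in_span q l A B V (DE V - {X}) S \<longrightarrow>
        card S = card (CH X \<union> CH V) - 1 \<and>
        (\<forall>U\<in>S. is_latent U \<longrightarrow> CH U \<subseteq> CH X \<union> CH V))"
    using faith unfolding sem_ur_faithful_def by (rule conjunct2[OF conjunct2])
  then show ?thesis using a by blast
qed

lemma indep:
  assumes J: "J \<subseteq> Obs ` {..<q}"
    and z: "\<And>x. Obs x \<in> J \<Longrightarrow> (\<Sum>Y\<in>J. f Y * TT Y (Obs x)) = 0"
    and Y: "Y \<in> J"
  shows "f Y = 0"
proof (rule ccontr)
  assume nz: "f Y \<noteq> 0"
  let ?K = "{j. Obs j \<in> J \<and> f (Obs j) \<noteq> 0}"
  have Kq: "?K \<subseteq> {..<q}" using J by auto
  have finK: "finite ?K" using Kq finite_subset by blast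
  obtain y where y: "Y = Obs y" using J Y by auto
  have "y \<in> ?K" using Y y nz by simp
  then have neK: "?K \<noteq> {}" by blast
  let ?m = "Min ?K"
  have m: "?m \<in> ?K" using Min_in[OF finK neK] .
  have mle: "\<And>j. j \<in> ?K \<Longrightarrow> ?m \<le> j" using finK by simp
  have finJ: "finite J" using J finite_subset by blast
  have mJ: "Obs ?m \<in> J" using m by simp
  have "(\<Sum>Z\<in>J. f Z * TT Z (Obs ?m)) = f (Obs ?m) * TT (Obs ?m) (Obs ?m) + (\<Sum>Z\<in>J - {Obs ?m}. f Z * TT Z (Obs ?m))"
    using mJ finJ by (simp add: sum.remove)
  also have "(\<Sum>Z\<in>J - {Obs ?m}. f Z * TT Z (Obs ?m)) = 0"
  proof (rule sum.neutral, rule ballI)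
    fix Z assume Z: "Z \<in> J - {Obs ?m}"
    then obtain j where j: "Z = Obs j" using J by auto
    show "f Z * TT Z (Obs ?m) = 0"
    proof (cases "f Z = 0")
      case False
      then have "j \<in> ?K" using Z j by simp
      then have "?m \<le> j" by (rule mle)
      moreover have "j \<noteq> ?m" using Z j by auto
      ultimately have "?m < j" by simp
      then show ?thesis using TE_Obs_zero j by simp
    qed simp
  qed
  finally have "(\<Sum>Z\<in>J. f Z * TT Z (Obs ?m)) = f (Obs ?m)" by (simp add: TE_self)
  moreover have "f (Obs ?m) \<noteq> 0" using m by simp
  ultimately show False using z[OF mJ] by simp
qed

lemma PC_sub: "V \<in> NN \<Longrightarrow> PC V \<subseteq> NN" using PC_char by auto

lemma key:
  assumes V: "V \<in> NN" and S: "S \<subseteq> PC V" and cS: "card S \<le> card (CH V)"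
    and sp: "TC_in_span q l A B V (DE V) S"
  shows "card S = card (CH V)" "\<forall>U\<in>S. is_latent U \<longrightarrow> CH U \<subseteq> CH V" "\<forall>j. Obs j \<in> S \<longrightarrow> Obs j \<in> CH V"
proof -
  note b1 = faith_b1[OF V S cS sp]
  show cardeq: "card S = card (CH V)" using b1 by simp
  show lat: "\<forall>U\<in>S. is_latent U \<longrightarrow> CH U \<subseteq> CH V" using b1 by simp
  show "\<forall>j. Obs j \<in> S \<longrightarrow> Obs j \<in> CH V"
  proof (intro allI impI, rule ccontr)
    fix oo assume o: "Obs oo \<in> S" and no: "Obs oo \<notin> CH V"
    obtain c where c: "\<forall>X\<in>DE V. TT V X = (\<Sum>U\<in>S. c U * TT U X)" using sp unfolding TC_in_span_def by blast
    have PCs: "PC V = {U \<in> NN. U \<noteq> V \<and> supp U \<subseteq> dset V}" using PC_char[OF V] .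
    have SN: "S \<subseteq> NN" using S PCs by blast
    have finS: "finite S" using SN finite_nodes finite_subset by blast
    define J where "J = Obs ` dset V"
    have J: "J \<subseteq> Obs ` {..<q}" using dset_sub unfolding J_def by blast
    have finJ: "finite J" using J finite_subset by blast
    have ChJ: "CH V \<subseteq> J"
    proof
      fix y assume "y \<in> CH V"
      then have yD: "y \<in> DE V" using Ch_De by blast
      then obtain j where "y = Obs j" using De_sub by blast
      then show "y \<in> J" using yD unfolding J_def dset_def by blast
    qed
    have SobsJ: "\<And>j. Obs j \<in> S \<Longrightarrow> Obs j \<in> J"
    proof -
      fix j assume js: "Obs j \<in> S"
      then have "j < q" using SN nodes_Obs_iff by blast
      then have "j \<in> supp (Obs j)" using supp_Obs by simp
      moreover have "supp (Obs j) \<subseteq> dset V" using js S PCs by blast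
      ultimately show "Obs j \<in> J" unfolding J_def by blast
    qed
    define r where "r U Y = (if is_latent U then (if Y \<in> CH U then ew U Y else 0) else (if Y = U then 1 else 0))" for U Y
    define rV where "rV Y = (if Y \<in> CH V then ew V Y else 0)" for Y
    have repU: "TT U (Obs x) = (\<Sum>Y\<in>J. r U Y * TT Y (Obs x))" if U: "U \<in> S" for U x
    proof (cases "is_latent U")
      case True
      then have "U \<noteq> Obs x" by (auto simp: is_latent_def)
      then have "TT U (Obs x) = (\<Sum>Y\<in>CH U. ew U Y * TT Y (Obs x))" by (rule TE_vec)
      also have "\<dots> = (\<Sum>Y\<in>J \<inter> CH U. ew U Y * TT Y (Obs x))"
      proof -
        have "CH U \<subseteq> J" using lat U True ChJ by blast
        then show ?thesis by (simp add: Int_absorb1)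
      qed
      also have "\<dots> = (\<Sum>Y\<in>J. (if Y \<in> CH U then ew U Y * TT Y (Obs x) else 0))"
        using finJ by (simp add: sum.inter_restrict)
      also have "\<dots> = (\<Sum>Y\<in>J. r U Y * TT Y (Obs x))" by (rule sum.cong) (simp_all add: r_def True)
      finally show ?thesis .
    next
      case False
      then obtain j where j: "U = Obs j" by (cases U) (auto simp: is_latent_def)
      have "(\<Sum>Y\<in>J. r U Y * TT Y (Obs x)) = (\<Sum>Y\<in>J. (if Y = U then TT U (Obs x) else 0))"
        by (rule sum.cong) (simp_all add: r_def False)
      also have "\<dots> = TT U (Obs x)" using SobsJ U j finJ by simp
      finally show ?thesis by simp
    qed
    have repV: "TT V (Obs x) = (\<Sum>Y\<in>J. rV Y * TT Y (Obs x))" if x: "x \<in> dset V" for x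
    proof -
      have "V \<noteq> Obs x" using x De_not_self by (auto simp: dset_def)
      then have "TT V (Obs x) = (\<Sum>Y\<in>CH V. ew V Y * TT Y (Obs x))" by (rule TE_vec)
      also have "\<dots> = (\<Sum>Y\<in>J \<inter> CH V. ew V Y * TT Y (Obs x))" using ChJ by (simp add: Int_absorb1)
      also have "\<dots> = (\<Sum>Y\<in>J. (if Y \<in> CH V then ew V Y * TT Y (Obs x) else 0))"
        using finJ by (simp add: sum.inter_restrict)
      also have "\<dots> = (\<Sum>Y\<in>J. rV Y * TT Y (Obs x))" by (rule sum.cong) (simp_all add: rV_def)
      finally show ?thesis .
    qed
    have eq0: "(\<Sum>Y\<in>J. ((\<Sum>U\<in>S. c U * r U Y) - rV Y) * TT Y (Obs x)) = 0" if xJ: "Obs x \<in> J" for x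
    proof -
      have x: "x \<in> dset V" using xJ by (auto simp: J_def)
      have "TT V (Obs x) = (\<Sum>U\<in>S. c U * TT U (Obs x))" using c x by (simp add: dset_def)
      also have "\<dots> = (\<Sum>U\<in>S. c U * (\<Sum>Y\<in>J. r U Y * TT Y (Obs x)))"
        by (rule sum.cong) (simp_all add: repU)
      also have "\<dots> = (\<Sum>U\<in>S. \<Sum>Y\<in>J. c U * r U Y * TT Y (Obs x))"
        by (simp add: sum_distrib_left mult.assoc)
      also have "\<dots> = (\<Sum>Y\<in>J. \<Sum>U\<in>S. c U * r U Y * TT Y (Obs x))"
        by (rule sum.swap)
      also have "\<dots> = (\<Sum>Y\<in>J. (\<Sum>U\<in>S. c U * r U Y) * TT Y (Obs x))"
        by (simp add: sum_distrib_right)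
      finally have "(\<Sum>Y\<in>J. rV Y * TT Y (Obs x)) = (\<Sum>Y\<in>J. (\<Sum>U\<in>S. c U * r U Y) * TT Y (Obs x))"
        using repV[OF x] by simp
      then show ?thesis by (simp add: left_diff_distrib sum_subtractf)
    qed
    have oJ: "Obs oo \<in> J" using SobsJ[OF o] .
    have f0: "(\<Sum>U\<in>S. c U * r U (Obs oo)) - rV (Obs oo) = 0"
      using indep[where f = "\<lambda>Y. (\<Sum>U\<in>S. c U * r U Y) - rV Y", OF J eq0 oJ] by simp
    have rv0: "rV (Obs oo) = 0" using no by (simp add: rV_def)
    have "(\<Sum>U\<in>S. c U * r U (Obs oo)) = c (Obs oo) * r (Obs oo) (Obs oo) + (\<Sum>U\<in>S - {Obs oo}. c U * r U (Obs oo))"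
      using o finS by (simp add: sum.remove)
    also have "(\<Sum>U\<in>S - {Obs oo}. c U * r U (Obs oo)) = 0"
    proof (rule sum.neutral, rule ballI)
      fix U assume U: "U \<in> S - {Obs oo}"
      show "c U * r U (Obs oo) = 0"
      proof (cases "is_latent U")
        case True
        then have "Obs oo \<notin> CH U" using lat U no by blast
        then show ?thesis by (simp add: r_def True)
      next
        case False
        have "Obs oo \<noteq> U" using U by blast
        then show ?thesis using False by (simp add: r_def)
      qed
    qed
    also have "r (Obs oo) (Obs oo) = 1" by (simp add: r_def is_latent_def)
    finally have c0: "c (Obs oo) = 0" using f0 rv0 by simp
    have sp2: "TC_in_span q l A B V (DE V) (S - {Obs oo})"
      unfolding TC_in_span_def
    proof (rule exI[of _ c], rule ballI)
      fix X assume "X \<in> DE V"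
      then have "TT V X = (\<Sum>U\<in>S. c U * TT U X)" using c by blast
      also have "\<dots> = c (Obs oo) * TT (Obs oo) X + (\<Sum>U\<in>S - {Obs oo}. c U * TT U X)"
        using o finS by (simp add: sum.remove)
      finally show "TT V X = (\<Sum>U\<in>S - {Obs oo}. c U * TT U X)" using c0 by simp
    qed
    have cS1: "card (S - {Obs oo}) = card S - 1" using o finS by simp
    have "card S > 0" using o finS card_gt_0_iff by blast
    then have c1: "card S \<ge> 1" by simp
    then have c2: "card (S - {Obs oo}) \<le> card (CH V)" using cS cS1 by simp
    have c3: "S - {Obs oo} \<subseteq> PC V" using S by blast
    have "card (S - {Obs oo}) = card (CH V)" using faith_b1[OF V c3 c2 sp2] by (rule conjunct1)
    then show False using cardeq cS1 c1 by simp
  qed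
qed

lemma key_cover:
  assumes V: "V \<in> NN" and S: "S \<subseteq> PC V" and cS: "card S \<le> card (CH V)"
    and sp: "TC_in_span q l A B V (DE V) S" and U: "U \<in> S" and ne: "supp U \<noteq> {}"
  shows "Obs (Min (supp U)) \<in> CH V"
proof -
  have UN: "U \<in> NN" using U S PC_sub[OF V] by blast
  from Min_supp[OF UN ne] show ?thesis
  proof
    assume "U = Obs (Min (supp U))"
    then show ?thesis using key(3)[OF V S cS sp] U by metis
  next
    assume "is_latent U \<and> Obs (Min (supp U)) \<in> CH U"
    then show ?thesis using key(2)[OF V S cS sp] U by blast
  qed
qed

end


context model begin

definition Tm :: "real mat" where "Tm = mat q q (\<lambda>(j,k). TT (Obs k) (Obs j))"

lemma A_car: "A \<in> carrier_mat q q" and B_car: "B \<in> carrier_mat q l"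
  using sem unfolding sem_ur_def by auto

lemma sum_Ch_Obs: assumes k: "k < q"
  shows "(\<Sum>c\<in>CH (Obs k). ew (Obs k) c * g c) = (\<Sum>m<q. A $$ (m,k) * g (Obs m))"
proof -
  have ch: "CH (Obs k) = Obs ` {m. m < q \<and> A $$ (m,k) \<noteq> 0}" using k unfolding children_def edges_def by auto
  have "(\<Sum>c\<in>CH (Obs k). ew (Obs k) c * g c) = (\<Sum>m\<in>{m. m < q \<and> A $$ (m,k) \<noteq> 0}. A $$ (m,k) * g (Obs m))"
    unfolding ch by (subst sum.reindex) (auto simp: inj_on_def)
  also have "\<dots> = (\<Sum>m<q. A $$ (m,k) * g (Obs m))"
    by (rule sum.mono_neutral_left) auto
  finally show ?thesis .
qed

lemma sum_Ch_Lat: assumes i: "i < l"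
  shows "(\<Sum>c\<in>CH (Lat i). ew (Lat i) c * g c) = (\<Sum>m<q. B $$ (m,i) * g (Obs m))"
proof -
  have ch: "CH (Lat i) = Obs ` {m. m < q \<and> B $$ (m,i) \<noteq> 0}" using i unfolding children_def edges_def by auto
  have "(\<Sum>c\<in>CH (Lat i). ew (Lat i) c * g c) = (\<Sum>m\<in>{m. m < q \<and> B $$ (m,i) \<noteq> 0}. B $$ (m,i) * g (Obs m))"
    unfolding ch by (subst sum.reindex) (auto simp: inj_on_def)
  also have "\<dots> = (\<Sum>m<q. B $$ (m,i) * g (Obs m))"
    by (rule sum.mono_neutral_left) auto
  finally show ?thesis .
qed

lemma Tm_car: "Tm \<in> carrier_mat q q" unfolding Tm_def by simp

lemma Tm_inv: "Tm * (1\<^sub>m q - A) = 1\<^sub>m q"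
proof (rule eq_matI)
  show "dim_row (Tm * (1\<^sub>m q - A)) = dim_row (1\<^sub>m q)" using Tm_car by simp
  show "dim_col (Tm * (1\<^sub>m q - A)) = dim_col (1\<^sub>m q)" using A_car by simp
  fix j k assume j: "j < dim_row (1\<^sub>m q)" and k: "k < dim_col (1\<^sub>m q)"
  then have jq: "j < q" and kq: "k < q" by auto
  have "(Tm * (1\<^sub>m q - A)) $$ (j,k) = (\<Sum>m = 0..<q. Tm $$ (j,m) * (1\<^sub>m q - A) $$ (m,k))"
    using jq kq A_car Tm_car by (simp add: scalar_prod_def)
  also have "\<dots> = (\<Sum>m<q. TT (Obs m) (Obs j) * ((if m = k then 1 else 0) - A $$ (m,k)))"
    using jq kq A_car by (intro sum.cong) (auto simp: Tm_def)
  also have "\<dots> = (\<Sum>m<q. (if m = k then TT (Obs m) (Obs j) else 0)) - (\<Sum>m<q. A $$ (m,k) * TT (Obs m) (Obs j))"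
  proof -
    have "\<And>m. TT (Obs m) (Obs j) * ((if m = k then 1 else 0) - A $$ (m,k)) = (if m = k then TT (Obs m) (Obs j) else 0) - A $$ (m,k) * TT (Obs m) (Obs j)"
      by (simp add: right_diff_distrib)
    then show ?thesis by (simp add: sum_subtractf)
  qed
  also have "(\<Sum>m<q. (if m = k then TT (Obs m) (Obs j) else 0)) = TT (Obs k) (Obs j)"
    using kq by simp
  also have "(\<Sum>m<q. A $$ (m,k) * TT (Obs m) (Obs j)) = (\<Sum>c\<in>CH (Obs k). ew (Obs k) c * TT c (Obs j))"
    using sum_Ch_Obs[OF kq, of "\<lambda>c. TT c (Obs j)"] by simp
  also have "TT (Obs k) (Obs j) - \<dots> = (if k = j then 1 else 0)"
    using TE_decomp[of "Obs k" "Obs j"] by simp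
  finally show "(Tm * (1\<^sub>m q - A)) $$ (j,k) = 1\<^sub>m q $$ (j,k)" using jq kq by auto
qed

lemma inv_Tm: "the (mat_inverse (1\<^sub>m q - A)) = Tm"
proof -
  have IA: "1\<^sub>m q - A \<in> carrier_mat q q" using A_car by (simp add: minus_carrier_mat)
  have "det (Tm * (1\<^sub>m q - A)) = det Tm * det (1\<^sub>m q - A)" by (rule det_mult[OF Tm_car IA])
  then have "det (1\<^sub>m q - A) \<noteq> 0" using Tm_inv by auto
  then have U: "1\<^sub>m q - A \<in> Units (ring_mat TYPE(real) q ())"
    by (rule det_non_zero_imp_unit[OF IA])
  have "mat_inverse (1\<^sub>m q - A) \<noteq> None"
  proof
    assume "mat_inverse (1\<^sub>m q - A) = None"
    then have "1\<^sub>m q - A \<notin> Units (ring_mat TYPE(real) q ())" by (rule mat_inverse(1)[OF IA])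
    then show False using U by simp
  qed
  then obtain X where X: "mat_inverse (1\<^sub>m q - A) = Some X" by auto
  from mat_inverse(2)[OF IA X] have X1: "X * (1\<^sub>m q - A) = 1\<^sub>m q" and Xc: "X \<in> carrier_mat q q" by auto
  have R: "(1\<^sub>m q - A) * Tm = 1\<^sub>m q" by (rule mat_mult_left_right_inverse[OF Tm_car IA Tm_inv])
  have "X = X * ((1\<^sub>m q - A) * Tm)" using R Xc by simp
  also have "\<dots> = (X * (1\<^sub>m q - A)) * Tm" using Xc IA Tm_car by (simp add: assoc_mult_mat)
  also have "\<dots> = Tm" using X1 Tm_car by simp
  finally show ?thesis using X by simp
qed

lemma mix: assumes j: "j < q" and c: "c < l + q"
  shows "mixing_matrix q l A B $$ (j,c) = TT (if c < l then Lat c else Obs (c - l)) (Obs j)"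
proof -
  have "mixing_matrix q l A B $$ (j,c) = (if c < l then (Tm * B) $$ (j, c) else Tm $$ (j, c - l))"
    unfolding mixing_matrix_def Let_def inv_Tm using j c by simp
  also have "\<dots> = TT (if c < l then Lat c else Obs (c - l)) (Obs j)"
  proof (cases "c < l")
    case True
    have "(Tm * B) $$ (j, c) = (\<Sum>m = 0..<q. Tm $$ (j,m) * B $$ (m,c))"
      using j True B_car Tm_car by (simp add: scalar_prod_def)
    also have "\<dots> = (\<Sum>m<q. B $$ (m,c) * TT (Obs m) (Obs j))"
      using j by (intro sum.cong) (auto simp: Tm_def)
    also have "\<dots> = (\<Sum>ch\<in>CH (Lat c). ew (Lat c) ch * TT ch (Obs j))"
      using sum_Ch_Lat[OF True, of "\<lambda>ch. TT ch (Obs j)"] by simp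
    also have "\<dots> = TT (Lat c) (Obs j)" using TE_vec[of "Lat c" "Obs j"] by simp
    finally show ?thesis using True by simp
  next
    case False
    then show ?thesis using j c by (simp add: Tm_def)
  qed
  finally show ?thesis .
qed

end



context model begin

lemma DE_eq: "DE V = Obs ` dset V"
  using De_sub unfolding dset_def by auto

lemma span_iff: "TC_in_span q l A B V (Obs ` D) S \<longleftrightarrow> (\<exists>c. \<forall>j\<in>D. TT V (Obs j) = (\<Sum>U\<in>S. c U * TT U (Obs j)))"
  unfolding TC_in_span_def by auto

lemma ch_span: "j \<in> dset V \<Longrightarrow> TT V (Obs j) = (\<Sum>c\<in>CH V. ew V c * TT c (Obs j))"
proof -
  assume "j \<in> dset V"
  then have "V \<noteq> Obs j" using De_not_self by (auto simp: dset_def)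
  then show ?thesis by (rule TE_vec)
qed

lemma Ch_N: "CH V \<subseteq> NN" using Ch_sub nodes_Obs by auto

lemma dset_Obs_notin: "k \<notin> dset (Obs k)" using dset_Obs_gt by blast

lemma Obs_in_supp: "k < q \<Longrightarrow> k \<in> supp (Obs k)" using supp_Obs by simp

lemma supp_Ch_sub_dset: "V \<in> NN \<Longrightarrow> c \<in> CH V \<Longrightarrow> supp c \<subseteq> dset V"
  using De_supp Ch_De by blast

lemma Min_supp_Obs': "Obs j \<in> NN \<Longrightarrow> Min (supp (Obs j)) = j \<and> supp (Obs j) \<noteq> {}"
  using Min_supp_Obs Obs_in_supp nodes_Obs_iff by auto

end

locale two = M: model q l A B + M': model q l' A' B'
  for q l l' A B A' B' +
  fixes \<sigma> :: "node \<Rightarrow> node" and \<kappa> :: "node \<Rightarrow> real"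
  assumes bij: "bij_betw \<sigma> (nodes q l') (nodes q l)"
    and kap: "\<And>V. V \<in> nodes q l' \<Longrightarrow> \<kappa> V \<noteq> 0"
    and rel: "\<And>V j. V \<in> nodes q l' \<Longrightarrow> j < q \<Longrightarrow>
       total_effect q l' A' B' V (Obs j) = \<kappa> V * total_effect q l A B (\<sigma> V) (Obs j)"
begin

abbreviation "\<sigma>i \<equiv> inv_into (nodes q l') \<sigma>"

lemma sN: "V \<in> M'.NN \<Longrightarrow> \<sigma> V \<in> M.NN" by (rule bij_betw_apply[OF bij])
lemma s_inj: "V \<in> M'.NN \<Longrightarrow> W \<in> M'.NN \<Longrightarrow> \<sigma> V = \<sigma> W \<Longrightarrow> V = W"
  by (rule inj_onD[OF bij_betw_imp_inj_on[OF bij]])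
lemma sim: "\<sigma> ` M'.NN = M.NN" by (rule bij_betw_imp_surj_on[OF bij])
lemma si_N: "U \<in> M.NN \<Longrightarrow> \<sigma>i U \<in> M'.NN"
  by (rule inv_into_into) (simp add: sim)
lemma s_si: "U \<in> M.NN \<Longrightarrow> \<sigma> (\<sigma>i U) = U"
  by (rule f_inv_into_f) (simp add: sim)
lemma si_s: "V \<in> M'.NN \<Longrightarrow> \<sigma>i (\<sigma> V) = V"
  by (rule inv_into_f_f[OF bij_betw_imp_inj_on[OF bij]])
lemma inj_s: "S \<subseteq> M'.NN \<Longrightarrow> inj_on \<sigma> S"
  by (rule inj_on_subset[OF bij_betw_imp_inj_on[OF bij]])
lemma inj_si: "S \<subseteq> M.NN \<Longrightarrow> inj_on \<sigma>i S"
  by (rule inj_on_inv_into) (simp add: sim)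

lemma supp_rel: assumes V: "V \<in> M'.NN" shows "M'.supp V = M.supp (\<sigma> V)"
proof (rule Set.set_eqI)
  fix j show "j \<in> M'.supp V \<longleftrightarrow> j \<in> M.supp (\<sigma> V)"
    unfolding M'.supp_def M.supp_def by (cases "j < q") (simp_all add: rel[OF V] kap[OF V])
qed

lemma supp_rel_i: "U \<in> M.NN \<Longrightarrow> M'.supp (\<sigma>i U) = M.supp U"
  using supp_rel[OF si_N] s_si by simp

lemma obs_supp: assumes k: "k < q" shows "M.supp (Obs k) = M'.supp (Obs k)"
proof
  have kN: "Obs k \<in> M.NN" "Obs k \<in> M'.NN" using k by (simp_all add: M.nodes_Obs_iff M'.nodes_Obs_iff)
  have "k \<in> M.supp (\<sigma> (Obs k))" using supp_rel[OF kN(2)] M'.Obs_in_supp[OF k] by simp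
  then have "M.supp (Obs k) \<subseteq> M.supp (\<sigma> (Obs k))" using M.supp_mono sN kN by blast
  then show "M.supp (Obs k) \<subseteq> M'.supp (Obs k)" using supp_rel[OF kN(2)] by simp
  have "k \<in> M'.supp (\<sigma>i (Obs k))" using supp_rel_i[OF kN(1)] M.Obs_in_supp[OF k] by simp
  then have "M'.supp (Obs k) \<subseteq> M'.supp (\<sigma>i (Obs k))" using M'.supp_mono si_N kN by blast
  then show "M'.supp (Obs k) \<subseteq> M.supp (Obs k)" using supp_rel_i[OF kN(1)] by simp
qed

lemma obs_dset: assumes k: "k < q" shows "M.dset (Obs k) = M'.dset (Obs k)"
proof -
  have "insert k (M.dset (Obs k)) = insert k (M'.dset (Obs k))"
    using obs_supp[OF k] M.supp_Obs[OF k] M'.supp_Obs[OF k] by simp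
  then show ?thesis using M.dset_Obs_notin[of k] M'.dset_Obs_notin[of k]
    by (metis Diff_insert_absorb)
qed

lemma transfer1:
  assumes V: "V \<in> M'.NN" and S: "S \<subseteq> M'.NN" and D: "D \<subseteq> {..<q}"
    and sp: "\<forall>j\<in>D. M'.TT V (Obs j) = (\<Sum>U\<in>S. c U * M'.TT U (Obs j))"
  shows "\<exists>d. \<forall>j\<in>D. M.TT (\<sigma> V) (Obs j) = (\<Sum>U\<in>\<sigma> ` S. d U * M.TT U (Obs j))"
proof (rule exI[of _ "\<lambda>U. c (\<sigma>i U) * \<kappa> (\<sigma>i U) / \<kappa> V"], rule ballI)
  fix j assume j: "j \<in> D"
  then have jq: "j < q" using D by auto
  have "(\<Sum>U\<in>\<sigma> ` S. c (\<sigma>i U) * \<kappa> (\<sigma>i U) / \<kappa> V * M.TT U (Obs j))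
      = (\<Sum>U\<in>S. c (\<sigma>i (\<sigma> U)) * \<kappa> (\<sigma>i (\<sigma> U)) / \<kappa> V * M.TT (\<sigma> U) (Obs j))"
    using inj_s[OF S] by (simp add: sum.reindex)
  also have "\<dots> = (\<Sum>U\<in>S. c U * M'.TT U (Obs j) / \<kappa> V)"
  proof (rule sum.cong[OF refl])
    fix U assume U: "U \<in> S"
    then have UN: "U \<in> M'.NN" using S by blast
    show "c (\<sigma>i (\<sigma> U)) * \<kappa> (\<sigma>i (\<sigma> U)) / \<kappa> V * M.TT (\<sigma> U) (Obs j) = c U * M'.TT U (Obs j) / \<kappa> V"
      using si_s[OF UN] rel[OF UN jq] by simp
  qed
  also have "\<dots> = M'.TT V (Obs j) / \<kappa> V" using sp j by (simp add: sum_divide_distrib)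
  also have "\<dots> = M.TT (\<sigma> V) (Obs j)" using rel[OF V jq] kap[OF V] by simp
  finally show "M.TT (\<sigma> V) (Obs j) = (\<Sum>U\<in>\<sigma> ` S. c (\<sigma>i U) * \<kappa> (\<sigma>i U) / \<kappa> V * M.TT U (Obs j))" by simp
qed

lemma transfer2:
  assumes V: "V \<in> M'.NN" and S: "S \<subseteq> M.NN" and D: "D \<subseteq> {..<q}"
    and sp: "\<forall>j\<in>D. M.TT (\<sigma> V) (Obs j) = (\<Sum>U\<in>S. c U * M.TT U (Obs j))"
  shows "\<exists>d. \<forall>j\<in>D. M'.TT V (Obs j) = (\<Sum>U\<in>\<sigma>i ` S. d U * M'.TT U (Obs j))"
proof (rule exI[of _ "\<lambda>U. \<kappa> V * c (\<sigma> U) / \<kappa> U"], rule ballI)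
  fix j assume j: "j \<in> D"
  then have jq: "j < q" using D by auto
  have "(\<Sum>U\<in>\<sigma>i ` S. \<kappa> V * c (\<sigma> U) / \<kappa> U * M'.TT U (Obs j))
      = (\<Sum>U\<in>S. \<kappa> V * c (\<sigma> (\<sigma>i U)) / \<kappa> (\<sigma>i U) * M'.TT (\<sigma>i U) (Obs j))"
    using inj_si[OF S] by (simp add: sum.reindex)
  also have "\<dots> = (\<Sum>U\<in>S. \<kappa> V * (c U * M.TT U (Obs j)))"
  proof (rule sum.cong[OF refl])
    fix U assume U: "U \<in> S"
    then have UN: "U \<in> M.NN" using S by blast
    have "M'.TT (\<sigma>i U) (Obs j) = \<kappa> (\<sigma>i U) * M.TT U (Obs j)"
      using rel[OF si_N[OF UN] jq] s_si[OF UN] by simp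
    then show "\<kappa> V * c (\<sigma> (\<sigma>i U)) / \<kappa> (\<sigma>i U) * M'.TT (\<sigma>i U) (Obs j) = \<kappa> V * (c U * M.TT U (Obs j))"
      using s_si[OF UN] kap[OF si_N[OF UN]] by simp
  qed
  also have "\<dots> = \<kappa> V * M.TT (\<sigma> V) (Obs j)" using sp j by (simp add: sum_distrib_left)
  also have "\<dots> = M'.TT V (Obs j)" using rel[OF V jq] by simp
  finally show "M'.TT V (Obs j) = (\<Sum>U\<in>\<sigma>i ` S. \<kappa> V * c (\<sigma> U) / \<kappa> U * M'.TT U (Obs j))" by simp
qed

lemma two_rev: "two q l' l A' B' A B \<sigma>i (\<lambda>V. 1 / \<kappa> (\<sigma>i V))"
proof (rule two.intro)
  show "model q l' A' B'" by (rule model.intro[OF M'.sem M'.faith])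
  show "model q l A B" by (rule model.intro[OF M.sem M.faith])
  show "two_axioms q l' l A' B' A B \<sigma>i (\<lambda>V. 1 / \<kappa> (\<sigma>i V))"
  proof (rule two_axioms.intro)
    show "bij_betw \<sigma>i (nodes q l) (nodes q l')" using bij by (rule bij_betw_inv_into)
    show "\<And>V. V \<in> nodes q l \<Longrightarrow> 1 / \<kappa> (\<sigma>i V) \<noteq> 0" using kap si_N by simp
    fix V j assume V: "V \<in> nodes q l" and j: "j < q"
    show "M.TT V (Obs j) = 1 / \<kappa> (\<sigma>i V) * M'.TT (\<sigma>i V) (Obs j)"
      using rel[OF si_N[OF V] j] s_si[OF V] kap[OF si_N[OF V]] by simp
  qed
qed

end

context model begin

lemma lat_child: assumes H: "Lat h \<in> NN" and s: "supp (Lat h) = supp (Obs k)" and k: "k < q"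
  shows "Obs k \<in> CH (Lat h)"
proof -
  have ne: "supp (Lat h) \<noteq> {}" using s Obs_in_supp[OF k] by auto
  have m: "Min (supp (Lat h)) = k" using s Min_supp_Obs[OF k] by simp
  from Min_supp[OF H ne] have "Obs (Min (supp (Lat h))) \<in> CH (Lat h)" by simp
  then show ?thesis using m by simp
qed

lemma X_notin_Ch: "X \<notin> CH X" using Ch_De De_not_self by blast

end

context two begin

lemma Obs_NN: "k < q \<Longrightarrow> Obs k \<in> M.NN \<and> Obs k \<in> M'.NN"
  by (simp add: M.nodes_Obs_iff M'.nodes_Obs_iff)

lemma sigma_obs_cases:
  assumes k: "k < q"
  shows "\<sigma> (Obs k) = Obs k \<or> (\<exists>h. \<sigma> (Obs k) = Lat h \<and> h < l \<and> M.supp (Lat h) = M.supp (Obs k))"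
proof -
  have kN2: "Obs k \<in> M'.NN" using Obs_NN[OF k] by (rule conjunct2)
  have sv: "M.supp (\<sigma> (Obs k)) = M.supp (Obs k)"
  proof -
    have "M.supp (\<sigma> (Obs k)) = M'.supp (Obs k)" using supp_rel[OF kN2] by (rule sym)
    also have "\<dots> = M.supp (Obs k)" using obs_supp[OF k] by (rule sym)
    finally show ?thesis .
  qed
  have VN: "\<sigma> (Obs k) \<in> M.NN" by (rule sN[OF kN2])
  show ?thesis
  proof (cases "\<sigma> (Obs k)")
    case (Lat h)
    have h: "h < l" using VN unfolding Lat by (simp only: M.nodes_Lat)
    have "M.supp (Lat h) = M.supp (Obs k)" using sv unfolding Lat .
    then show ?thesis using Lat h by blast
  next
    case (Obs m)
    have mq: "m < q" using VN unfolding Obs by (simp only: M.nodes_Obs_iff)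
    have e: "M.supp (Obs m) = M.supp (Obs k)" using sv unfolding Obs .
    have "m = Min (M.supp (Obs m))" using M.Min_supp_Obs[OF mq] by (rule sym)
    also have "\<dots> = Min (M.supp (Obs k))" unfolding e ..
    also have "\<dots> = k" by (rule M.Min_supp_Obs[OF k])
    finally have "m = k" .
    then show ?thesis using Obs by blast
  qed
qed

lemma notX: assumes k: "k < q" and su: "M.supp U \<subseteq> M.dset (Obs k)" shows "U \<noteq> Obs k"
proof
  assume "U = Obs k"
  then have "k \<in> M.supp U" using M.Obs_in_supp[OF k] by simp
  then show False using su M.dset_Obs_notin[of k] by blast
qed

lemma notX': assumes k: "k < q" and su: "M'.supp U \<subseteq> M'.dset (Obs k)" shows "U \<noteq> Obs k"
proof
  assume "U = Obs k"
  then have "k \<in> M'.supp U" using M'.Obs_in_supp[OF k] by simp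
  then show False using su M'.dset_Obs_notin[of k] by blast
qed

lemma card_obs:
  assumes k: "k < q"
  shows "card (M.CH (Obs k)) \<le> card (M'.CH (Obs k)) \<and>
     (\<forall>h. \<sigma> (Obs k) = Lat h \<longrightarrow> card (M.CH (Obs k) \<union> M.CH (Lat h)) - 1 \<le> card (M'.CH (Obs k)))"
proof -
  have XN: "Obs k \<in> M.NN" "Obs k \<in> M'.NN" using Obs_NN[OF k] by auto
  define S where "S = \<sigma> ` M'.CH (Obs k)"
  have ChN': "M'.CH (Obs k) \<subseteq> M'.NN" by (rule M'.Ch_N)
  have cardS: "card S = card (M'.CH (Obs k))" unfolding S_def by (rule card_image[OF inj_s[OF ChN']])
  have dX: "M'.dset (Obs k) = M.dset (Obs k)" using obs_dset[OF k] by simp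
  have Dq: "M'.dset (Obs k) \<subseteq> {..<q}" by (rule M'.dset_sub)
  have sp': "\<forall>j\<in>M'.dset (Obs k). M'.TT (Obs k) (Obs j) = (\<Sum>c\<in>M'.CH (Obs k). M'.ew (Obs k) c * M'.TT c (Obs j))"
    using M'.ch_span by blast
  obtain d where d0: "\<forall>j\<in>M'.dset (Obs k). M.TT (\<sigma> (Obs k)) (Obs j) = (\<Sum>U\<in>S. d U * M.TT U (Obs j))"
    using transfer1[OF XN(2) ChN' Dq sp'] unfolding S_def by blast
  have d: "\<forall>j\<in>M.dset (Obs k). M.TT (\<sigma> (Obs k)) (Obs j) = (\<Sum>U\<in>S. d U * M.TT U (Obs j))"
    using d0 dX by simp
  have Ssupp: "\<forall>U\<in>S. M.supp U \<subseteq> M.dset (Obs k)"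
  proof
    fix U assume "U \<in> S"
    then obtain c where c: "c \<in> M'.CH (Obs k)" "U = \<sigma> c" unfolding S_def by blast
    have "M.supp U = M'.supp c" using supp_rel c ChN' by auto
    also have "\<dots> \<subseteq> M'.dset (Obs k)" by (rule M'.supp_Ch_sub_dset[OF XN(2) c(1)])
    finally show "M.supp U \<subseteq> M.dset (Obs k)" using dX by simp
  qed
  have SN: "S \<subseteq> M.NN" unfolding S_def using sN ChN' by blast
  have SPC: "S \<subseteq> M.PC (Obs k)"
  proof
    fix U assume U: "U \<in> S"
    then have "U \<noteq> Obs k" using notX[OF k] Ssupp by blast
    then show "U \<in> M.PC (Obs k)" using M.PC_char[OF XN(1)] SN Ssupp U by blast
  qed
  from sigma_obs_cases[OF k] show ?thesis
  proof
    assume sX: "\<sigma> (Obs k) = Obs k"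
    have sp: "TC_in_span q l A B (Obs k) (M.DE (Obs k)) S"
      unfolding M.DE_eq M.span_iff using d sX by auto
    have "card S \<le> card (M.CH (Obs k)) \<Longrightarrow> card S = card (M.CH (Obs k))"
      using M.faith_b1[OF XN(1) SPC _ sp] by simp
    then have "card (M.CH (Obs k)) \<le> card S" by linarith
    then show ?thesis using cardS sX by simp
  next
    assume "\<exists>h. \<sigma> (Obs k) = Lat h \<and> h < l \<and> M.supp (Lat h) = M.supp (Obs k)"
    then obtain h where h: "\<sigma> (Obs k) = Lat h" "h < l" "M.supp (Lat h) = M.supp (Obs k)" by blast
    have HN: "Lat h \<in> M.NN" using h(2) M.nodes_Lat by simp
    have XCh: "Obs k \<in> M.CH (Lat h)" by (rule M.lat_child[OF HN h(3) k])
    have DE: "M.DE (Lat h) - {Obs k} = Obs ` M.dset (Obs k)"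
    proof -
      have "M.dset (Lat h) = insert k (M.dset (Obs k))"
        using M.supp_Lat[OF HN] h(3) M.supp_Obs[OF k] by simp
      then show ?thesis unfolding M.DE_eq using M.dset_Obs_notin[of k] by auto
    qed
    have sp: "TC_in_span q l A B (Lat h) (M.DE (Lat h) - {Obs k}) S"
      unfolding DE M.span_iff using d h(1) by auto
    have lat: "is_latent (Lat h)" by (simp add: is_latent_def)
    have "card S \<le> card (M.CH (Obs k) \<union> M.CH (Lat h)) - 1 \<Longrightarrow> card S = card (M.CH (Obs k) \<union> M.CH (Lat h)) - 1"
      by (rule M.faith_b2[OF HN lat XCh SPC _ sp])
    then have ge: "card (M.CH (Obs k) \<union> M.CH (Lat h)) - 1 \<le> card S" by linarith
    have "card (M.CH (Obs k)) + 1 \<le> card (M.CH (Obs k) \<union> M.CH (Lat h))"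
    proof -
      have sub: "insert (Obs k) (M.CH (Obs k)) \<subseteq> M.CH (Obs k) \<union> M.CH (Lat h)" using XCh by blast
      have fin: "finite (M.CH (Obs k) \<union> M.CH (Lat h))" using M.finite_Ch by simp
      have "card (insert (Obs k) (M.CH (Obs k))) = card (M.CH (Obs k)) + 1"
        using M.X_notin_Ch M.finite_Ch by simp
      then show ?thesis using card_mono[OF fin sub] by simp
    qed
    then show ?thesis using ge cardS h(1) by auto
  qed
qed

lemma incl_obs:
  assumes k: "k < q" and c': "card (M'.CH (Obs k)) \<le> card (M.CH (Obs k))"
  shows "M.CH (Obs k) \<subseteq> M'.CH (Obs k)"
proof -
  have XN: "Obs k \<in> M.NN" "Obs k \<in> M'.NN" using Obs_NN[OF k] by auto
  have dX: "M'.dset (Obs k) = M.dset (Obs k)" using obs_dset[OF k] by simp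
  have c1: "card (M.CH (Obs k)) \<le> card (M'.CH (Obs k))" using card_obs[OF k] by simp
  have ceq: "card (M'.CH (Obs k)) = card (M.CH (Obs k))" using c1 c' by simp
  have spM: "\<exists>e. \<forall>j\<in>M.dset (Obs k). M.TT (\<sigma> (Obs k)) (Obs j) = (\<Sum>c\<in>M.CH (Obs k). e c * M.TT c (Obs j))"
  proof (cases "\<sigma> (Obs k) = Obs k")
    case True
    show ?thesis
      by (rule exI[of _ "M.ew (Obs k)"]) (use True M.ch_span in simp)
  next
    case False
    then obtain h where h: "\<sigma> (Obs k) = Lat h" "h < l" "M.supp (Lat h) = M.supp (Obs k)"
      using sigma_obs_cases[OF k] by auto
    have HN: "Lat h \<in> M.NN" using h(2) M.nodes_Lat by simp
    have XCh: "Obs k \<in> M.CH (Lat h)" by (rule M.lat_child[OF HN h(3) k])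
    have cu: "card (M.CH (Obs k) \<union> M.CH (Lat h)) - 1 \<le> card (M.CH (Obs k))"
      using card_obs[OF k] h(1) ceq by simp
    have XnX: "Obs k \<notin> M.CH (Obs k)" by (rule M.X_notin_Ch)
    have sub: "M.CH (Lat h) - {Obs k} \<subseteq> M.CH (Obs k)"
    proof
      fix c assume c: "c \<in> M.CH (Lat h) - {Obs k}"
      show "c \<in> M.CH (Obs k)"
      proof (rule ccontr)
        assume nc: "c \<notin> M.CH (Obs k)"
        have sub2: "insert (Obs k) (insert c (M.CH (Obs k))) \<subseteq> M.CH (Obs k) \<union> M.CH (Lat h)"
          using c XCh by blast
        have fin: "finite (M.CH (Obs k) \<union> M.CH (Lat h))" using M.finite_Ch by simp
        have fc: "finite (M.CH (Obs k))" by (rule M.finite_Ch)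
        have c1: "card (insert c (M.CH (Obs k))) = Suc (card (M.CH (Obs k)))" using fc nc by simp
        have "Obs k \<notin> insert c (M.CH (Obs k))" using c XnX by blast
        then have "card (insert (Obs k) (insert c (M.CH (Obs k)))) = Suc (card (insert c (M.CH (Obs k))))"
          using fc by simp
        then have "card (insert (Obs k) (insert c (M.CH (Obs k)))) = card (M.CH (Obs k)) + 2"
          using c1 by simp
        then have "card (M.CH (Obs k)) + 2 \<le> card (M.CH (Obs k) \<union> M.CH (Lat h))"
          using card_mono[OF fin sub2] by simp
        then show False using cu by simp
      qed
    qed
    have CHeq: "M.CH (Lat h) - {Obs k} = M.CH (Obs k) \<inter> M.CH (Lat h)" using sub XnX by blast
    define w where "w = M.ew (Lat h) (Obs k)"
    show ?thesis
    proof (rule exI[of _ "\<lambda>c. w * M.ew (Obs k) c + (if c \<in> M.CH (Lat h) then M.ew (Lat h) c else 0)"], rule ballI)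
      fix j assume j: "j \<in> M.dset (Obs k)"
      have "M.TT (\<sigma> (Obs k)) (Obs j) = M.TT (Lat h) (Obs j)" using h(1) by simp
      also have "\<dots> = (\<Sum>c\<in>M.CH (Lat h). M.ew (Lat h) c * M.TT c (Obs j))" by (rule M.TE_vec) simp
      also have "\<dots> = w * M.TT (Obs k) (Obs j) + (\<Sum>c\<in>M.CH (Lat h) - {Obs k}. M.ew (Lat h) c * M.TT c (Obs j))"
        using XCh M.finite_Ch by (simp add: sum.remove w_def)
      also have "M.TT (Obs k) (Obs j) = (\<Sum>c\<in>M.CH (Obs k). M.ew (Obs k) c * M.TT c (Obs j))"
        by (rule M.ch_span[OF j])
      also have "(\<Sum>c\<in>M.CH (Lat h) - {Obs k}. M.ew (Lat h) c * M.TT c (Obs j))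
          = (\<Sum>c\<in>M.CH (Obs k). (if c \<in> M.CH (Lat h) then M.ew (Lat h) c * M.TT c (Obs j) else 0))"
        unfolding CHeq using M.finite_Ch by (simp add: sum.inter_restrict)
      also have "w * (\<Sum>c\<in>M.CH (Obs k). M.ew (Obs k) c * M.TT c (Obs j)) + \<dots>
          = (\<Sum>c\<in>M.CH (Obs k). (w * M.ew (Obs k) c + (if c \<in> M.CH (Lat h) then M.ew (Lat h) c else 0)) * M.TT c (Obs j))"
        by (simp add: sum_distrib_left sum.distrib[symmetric] distrib_right mult.assoc; intro sum.cong; simp)
      finally show "M.TT (\<sigma> (Obs k)) (Obs j) = (\<Sum>c\<in>M.CH (Obs k). (w * M.ew (Obs k) c + (if c \<in> M.CH (Lat h) then M.ew (Lat h) c else 0)) * M.TT c (Obs j))" .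
    qed
  qed
  then obtain e where e: "\<forall>j\<in>M.dset (Obs k). M.TT (\<sigma> (Obs k)) (Obs j) = (\<Sum>c\<in>M.CH (Obs k). e c * M.TT c (Obs j))"
    by blast
  obtain dd where dd: "\<forall>j\<in>M.dset (Obs k). M'.TT (Obs k) (Obs j) = (\<Sum>U\<in>\<sigma>i ` M.CH (Obs k). dd U * M'.TT U (Obs j))"
    using transfer2[OF XN(2) M.Ch_N M.dset_sub e] by blast
  define S' where "S' = \<sigma>i ` M.CH (Obs k)"
  have S'N: "S' \<subseteq> M'.NN" unfolding S'_def using si_N M.Ch_N by blast
  have S'supp: "\<forall>U\<in>S'. M'.supp U \<subseteq> M'.dset (Obs k)"
  proof
    fix U assume "U \<in> S'"
    then obtain c where c: "c \<in> M.CH (Obs k)" "U = \<sigma>i c" unfolding S'_def by blast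
    have "M'.supp U = M.supp c" using supp_rel_i c M.Ch_N by auto
    also have "\<dots> \<subseteq> M.dset (Obs k)" by (rule M.supp_Ch_sub_dset[OF XN(1) c(1)])
    finally show "M'.supp U \<subseteq> M'.dset (Obs k)" using dX by simp
  qed
  have S'PC: "S' \<subseteq> M'.PC (Obs k)"
  proof
    fix U assume U: "U \<in> S'"
    then have "U \<noteq> Obs k" using notX'[OF k] S'supp by blast
    then show "U \<in> M'.PC (Obs k)" using M'.PC_char[OF XN(2)] S'N S'supp U by blast
  qed
  have cS': "card S' = card (M.CH (Obs k))" unfolding S'_def by (rule card_image[OF inj_si[OF M.Ch_N]])
  have sp': "TC_in_span q l' A' B' (Obs k) (M'.DE (Obs k)) S'"
    unfolding M'.DE_eq M'.span_iff dX S'_def using dd by blast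
  have cle: "card S' \<le> card (M'.CH (Obs k))" using cS' c1 by simp
  show ?thesis
  proof
    fix c assume c: "c \<in> M.CH (Obs k)"
    then obtain j where j: "j < q" "c = Obs j" using M.Ch_sub by blast
    have U': "\<sigma>i c \<in> S'" using c S'_def by blast
    have su: "M'.supp (\<sigma>i c) = M.supp (Obs j)" using supp_rel_i M.Ch_N c j by auto
    have jN: "Obs j \<in> M.NN" using j M.nodes_Obs_iff by simp
    have ne: "M'.supp (\<sigma>i c) \<noteq> {}" and mn: "Min (M'.supp (\<sigma>i c)) = j"
      using su M.Min_supp_Obs'[OF jN] by auto
    have "Obs (Min (M'.supp (\<sigma>i c))) \<in> M'.CH (Obs k)"
      by (rule M'.key_cover[OF XN(2) S'PC cle sp' U' ne])
    then show "c \<in> M'.CH (Obs k)" using mn j by simp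
  qed
qed

end


context two begin

lemma lat_nonswap:
  assumes H: "Lat h' \<in> M'.NN" and s: "\<sigma> (Lat h') = Lat h"
  shows "card (M.CH (Lat h)) \<le> card (M'.CH (Lat h')) \<and> M.CH (Lat h) \<subseteq> M'.CH (Lat h')"
proof -
  have HN: "Lat h \<in> M.NN" using sN[OF H] unfolding s .
  have ds: "M'.dset (Lat h') = M.dset (Lat h)"
  proof -
    have "M'.dset (Lat h') = M'.supp (Lat h')" using M'.supp_Lat[OF H] by (rule sym)
    also have "\<dots> = M.supp (\<sigma> (Lat h'))" by (rule supp_rel[OF H])
    also have "\<dots> = M.supp (Lat h)" unfolding s ..
    also have "\<dots> = M.dset (Lat h)" by (rule M.supp_Lat[OF HN])
    finally show ?thesis .
  qed
  define S where "S = \<sigma> ` M'.CH (Lat h')"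
  have ChN': "M'.CH (Lat h') \<subseteq> M'.NN" by (rule M'.Ch_N)
  have cardS: "card S = card (M'.CH (Lat h'))" unfolding S_def by (rule card_image[OF inj_s[OF ChN']])
  have sp0: "\<forall>j\<in>M'.dset (Lat h'). M'.TT (Lat h') (Obs j) = (\<Sum>c\<in>M'.CH (Lat h'). M'.ew (Lat h') c * M'.TT c (Obs j))"
    using M'.ch_span by blast
  obtain d where d0: "\<forall>j\<in>M'.dset (Lat h'). M.TT (\<sigma> (Lat h')) (Obs j) = (\<Sum>U\<in>S. d U * M.TT U (Obs j))"
    using transfer1[OF H ChN' M'.dset_sub sp0] unfolding S_def by blast
  have d: "\<forall>j\<in>M.dset (Lat h). M.TT (Lat h) (Obs j) = (\<Sum>U\<in>S. d U * M.TT U (Obs j))"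
    using d0 unfolding ds s .
  have Ssupp: "\<forall>U\<in>S. M.supp U \<subseteq> M.dset (Lat h)"
  proof
    fix U assume "U \<in> S"
    then obtain c where c: "c \<in> M'.CH (Lat h')" "U = \<sigma> c" unfolding S_def by blast
    have "M.supp U = M'.supp c" using supp_rel c ChN' by auto
    also have "\<dots> \<subseteq> M'.dset (Lat h')" by (rule M'.supp_Ch_sub_dset[OF H c(1)])
    finally show "M.supp U \<subseteq> M.dset (Lat h)" unfolding ds .
  qed
  have SN: "S \<subseteq> M.NN" unfolding S_def using sN ChN' by blast
  have SnH: "\<forall>U\<in>S. U \<noteq> Lat h"
  proof
    fix U assume "U \<in> S"
    then obtain c where c: "c \<in> M'.CH (Lat h')" "U = \<sigma> c" unfolding S_def by blast
    show "U \<noteq> Lat h"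
    proof
      assume "U = Lat h"
      then have "\<sigma> c = \<sigma> (Lat h')" using c s by simp
      then have "c = Lat h'" using s_inj c ChN' H by blast
      then show False using c M'.Ch_not_Lat by blast
    qed
  qed
  have SPC: "S \<subseteq> M.PC (Lat h)" using M.PC_char[OF HN] SN Ssupp SnH by blast
  have sp: "TC_in_span q l A B (Lat h) (M.DE (Lat h)) S"
    unfolding M.DE_eq M.span_iff using d by blast
  have "card S \<le> card (M.CH (Lat h)) \<Longrightarrow> card S = card (M.CH (Lat h))"
    using M.faith_b1[OF HN SPC _ sp] by simp
  then have c1: "card (M.CH (Lat h)) \<le> card (M'.CH (Lat h'))" using cardS by linarith
  have spM: "\<forall>j\<in>M.dset (Lat h). M.TT (\<sigma> (Lat h')) (Obs j) = (\<Sum>c\<in>M.CH (Lat h). M.ew (Lat h) c * M.TT c (Obs j))"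
    unfolding s using M.ch_span by blast
  obtain dd where dd: "\<forall>j\<in>M.dset (Lat h). M'.TT (Lat h') (Obs j) = (\<Sum>U\<in>\<sigma>i ` M.CH (Lat h). dd U * M'.TT U (Obs j))"
    using transfer2[OF H M.Ch_N M.dset_sub spM] by blast
  define S' where "S' = \<sigma>i ` M.CH (Lat h)"
  have S'N: "S' \<subseteq> M'.NN" unfolding S'_def using si_N M.Ch_N by blast
  have S'supp: "\<forall>U\<in>S'. M'.supp U \<subseteq> M'.dset (Lat h')"
  proof
    fix U assume "U \<in> S'"
    then obtain c where c: "c \<in> M.CH (Lat h)" "U = \<sigma>i c" unfolding S'_def by blast
    have "M'.supp U = M.supp c" using supp_rel_i c M.Ch_N by auto
    also have "\<dots> \<subseteq> M.dset (Lat h)" by (rule M.supp_Ch_sub_dset[OF HN c(1)])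
    finally show "M'.supp U \<subseteq> M'.dset (Lat h')" unfolding ds .
  qed
  have S'nH: "\<forall>U\<in>S'. U \<noteq> Lat h'"
  proof
    fix U assume "U \<in> S'"
    then obtain c where c: "c \<in> M.CH (Lat h)" "U = \<sigma>i c" unfolding S'_def by blast
    have cN: "c \<in> M.NN" using c M.Ch_N by blast
    show "U \<noteq> Lat h'"
    proof
      assume "U = Lat h'"
      then have "c = \<sigma> (Lat h')" using c s_si[OF cN] by simp
      then have "c = Lat h" using s by simp
      then show False using c M.Ch_not_Lat by blast
    qed
  qed
  have S'PC: "S' \<subseteq> M'.PC (Lat h')" using M'.PC_char[OF H] S'N S'supp S'nH by blast
  have cS': "card S' = card (M.CH (Lat h))" unfolding S'_def by (rule card_image[OF inj_si[OF M.Ch_N]])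
  have sp': "TC_in_span q l' A' B' (Lat h') (M'.DE (Lat h')) S'"
    unfolding M'.DE_eq M'.span_iff ds S'_def using dd by blast
  have cle: "card S' \<le> card (M'.CH (Lat h'))" using cS' c1 by simp
  have "M.CH (Lat h) \<subseteq> M'.CH (Lat h')"
  proof
    fix c assume c: "c \<in> M.CH (Lat h)"
    then obtain j where j: "j < q" "c = Obs j" using M.Ch_sub by blast
    have U': "\<sigma>i c \<in> S'" using c S'_def by blast
    have su: "M'.supp (\<sigma>i c) = M.supp (Obs j)" using supp_rel_i M.Ch_N c j by auto
    have jN: "Obs j \<in> M.NN" using j M.nodes_Obs_iff by simp
    have ne: "M'.supp (\<sigma>i c) \<noteq> {}" and mn: "Min (M'.supp (\<sigma>i c)) = j"
      using su M.Min_supp_Obs'[OF jN] by auto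
    have "Obs (Min (M'.supp (\<sigma>i c))) \<in> M'.CH (Lat h')"
      by (rule M'.key_cover[OF H S'PC cle sp' U' ne])
    then show "c \<in> M'.CH (Lat h')" using mn j by simp
  qed
  then show ?thesis using c1 by simp
qed

lemma lat_swap:
  assumes H: "Lat h' \<in> M'.NN" and s: "\<sigma> (Lat h') = Obs k"
  shows "is_latent (\<sigma> (Obs k)) \<and> card (M'.CH (Lat h')) \<le> card (M.CH (\<sigma> (Obs k))) \<and>
         (card (M.CH (\<sigma> (Obs k))) \<le> card (M'.CH (Lat h')) \<longrightarrow> M.CH (\<sigma> (Obs k)) \<subseteq> M'.CH (Lat h'))"
proof -
  have kN1: "Obs k \<in> M.NN" using sN[OF H] unfolding s .
  have k: "k < q" using kN1 M.nodes_Obs_iff by simp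
  have kN2: "Obs k \<in> M'.NN" using Obs_NN[OF k] by (rule conjunct2)
  define H1 where "H1 = \<sigma> (Obs k)"
  have H1N: "H1 \<in> M.NN" unfolding H1_def by (rule sN[OF kN2])
  have sH1: "M.supp H1 = M.supp (Obs k)"
  proof -
    have "M.supp H1 = M'.supp (Obs k)" unfolding H1_def using supp_rel[OF kN2] by (rule sym)
    also have "\<dots> = M.supp (Obs k)" using obs_supp[OF k] by (rule sym)
    finally show ?thesis .
  qed
  have H1ne: "H1 \<noteq> Obs k"
  proof
    assume "H1 = Obs k"
    then have "\<sigma> (Obs k) = \<sigma> (Lat h')" using s H1_def by simp
    then have "Obs k = Lat h'" using s_inj[OF kN2 H] by blast
    then show False by simp
  qed
  obtain h1 where h1: "H1 = Lat h1"
  proof (cases H1)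
    case (Lat x) then show ?thesis using that by blast
  next
    case (Obs m)
    have mq: "m < q" using H1N unfolding Obs by (simp only: M.nodes_Obs_iff)
    have e: "M.supp (Obs m) = M.supp (Obs k)" using sH1 unfolding Obs .
    have "m = Min (M.supp (Obs m))" using M.Min_supp_Obs[OF mq] by (rule sym)
    also have "\<dots> = Min (M.supp (Obs k))" unfolding e ..
    also have "\<dots> = k" by (rule M.Min_supp_Obs[OF k])
    finally have "m = k" .
    then show ?thesis using H1ne Obs by simp
  qed
  have H1N': "Lat h1 \<in> M.NN" using H1N unfolding h1 .
  have XCh: "Obs k \<in> M.CH H1" unfolding h1 by (rule M.lat_child[OF H1N' sH1[unfolded h1] k])
  have dH': "M'.dset (Lat h') = M.supp (Obs k)"
  proof -
    have "M'.dset (Lat h') = M'.supp (Lat h')" using M'.supp_Lat[OF H] by (rule sym)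
    also have "\<dots> = M.supp (\<sigma> (Lat h'))" by (rule supp_rel[OF H])
    also have "\<dots> = M.supp (Obs k)" unfolding s ..
    finally show ?thesis .
  qed
  define w where "w = M.ew H1 (Obs k)"
  have w: "w \<noteq> 0" unfolding w_def by (rule M.Ch_ew[OF XCh])
  define S where "S = insert H1 (M.CH H1 - {Obs k})"
  have H1nS: "H1 \<notin> M.CH H1 - {Obs k}" using h1 M.Ch_not_Lat by blast
  have finC: "finite (M.CH H1 - {Obs k})" using M.finite_Ch by blast
  have SN: "S \<subseteq> M.NN" using H1N M.Ch_N unfolding S_def by blast
  define dc where "dc U = (if U = H1 then 1 / w else - M.ew H1 U / w)" for U
  have spM: "\<forall>j\<in>M'.dset (Lat h'). M.TT (\<sigma> (Lat h')) (Obs j) = (\<Sum>U\<in>S. dc U * M.TT U (Obs j))"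
  proof (rule ballI)
    fix j assume j: "j \<in> M'.dset (Lat h')"
    define R where "R = (\<Sum>c\<in>M.CH H1 - {Obs k}. M.ew H1 c * M.TT c (Obs j))"
    have "M.TT H1 (Obs j) = (\<Sum>c\<in>M.CH H1. M.ew H1 c * M.TT c (Obs j))"
      by (rule M.TE_vec) (simp add: h1)
    also have "\<dots> = w * M.TT (Obs k) (Obs j) + R"
      unfolding R_def w_def using XCh M.finite_Ch by (simp add: sum.remove)
    finally have e1: "M.TT H1 (Obs j) = w * M.TT (Obs k) (Obs j) + R" .
    have "(\<Sum>U\<in>S. dc U * M.TT U (Obs j)) = dc H1 * M.TT H1 (Obs j) + (\<Sum>c\<in>M.CH H1 - {Obs k}. dc c * M.TT c (Obs j))"
      unfolding S_def by (rule sum.insert[OF finC H1nS])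
    also have "(\<Sum>c\<in>M.CH H1 - {Obs k}. dc c * M.TT c (Obs j)) = (\<Sum>c\<in>M.CH H1 - {Obs k}. - (M.ew H1 c * M.TT c (Obs j)) / w)"
    proof (rule sum.cong[OF refl])
      fix c assume "c \<in> M.CH H1 - {Obs k}"
      then have "c \<noteq> H1" using H1nS by blast
      then show "dc c * M.TT c (Obs j) = - (M.ew H1 c * M.TT c (Obs j)) / w" by (simp add: dc_def)
    qed
    also have "\<dots> = - R / w" unfolding R_def by (simp add: sum_divide_distrib sum_negf)
    also have "dc H1 = 1 / w" by (simp add: dc_def)
    finally have "(\<Sum>U\<in>S. dc U * M.TT U (Obs j)) = 1 / w * (w * M.TT (Obs k) (Obs j) + R) + - R / w"
      using e1 by simp
    also have "\<dots> = M.TT (Obs k) (Obs j)" using w by (simp add: field_simps)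
    finally show "M.TT (\<sigma> (Lat h')) (Obs j) = (\<Sum>U\<in>S. dc U * M.TT U (Obs j))" unfolding s by simp
  qed
  obtain dd where dd: "\<forall>j\<in>M'.dset (Lat h'). M'.TT (Lat h') (Obs j) = (\<Sum>U\<in>\<sigma>i ` S. dd U * M'.TT U (Obs j))"
    using transfer2[OF H SN M'.dset_sub spM] by blast
  define S' where "S' = \<sigma>i ` S"
  have siH1: "\<sigma>i H1 = Obs k" unfolding H1_def by (rule si_s[OF kN2])
  have cS': "card S' = card (M.CH H1)"
  proof -
    have "card S' = card S" unfolding S'_def by (rule card_image[OF inj_si[OF SN]])
    also have "\<dots> = Suc (card (M.CH H1 - {Obs k}))" unfolding S_def using finC H1nS by simp
    also have "\<dots> = card (M.CH H1)"
    proof -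
      have "card (M.CH H1) > 0" using XCh M.finite_Ch card_gt_0_iff by blast
      then show ?thesis using XCh M.finite_Ch by simp
    qed
    finally show ?thesis .
  qed
  have S'N: "S' \<subseteq> M'.NN" unfolding S'_def using si_N SN by blast
  have S'supp: "\<forall>U\<in>S'. M'.supp U \<subseteq> M'.dset (Lat h')"
  proof
    fix U' assume "U' \<in> S'"
    then obtain U where U: "U \<in> S" "U' = \<sigma>i U" unfolding S'_def by blast
    have UN: "U \<in> M.NN" using U SN by blast
    have e: "M'.supp U' = M.supp U" using supp_rel_i[OF UN] U by simp
    have "M.supp U \<subseteq> M.supp (Obs k)"
    proof (cases "U = H1")
      case True then show ?thesis using sH1 by simp
    next
      case False
      then have "U \<in> M.CH H1" using U unfolding S_def by blast
      then have "M.supp U \<subseteq> M.dset H1" by (rule M.supp_Ch_sub_dset[OF H1N])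
      also have "M.dset H1 = M.supp H1" unfolding h1 using M.supp_Lat[OF H1N'] by (rule sym)
      finally show ?thesis using sH1 by simp
    qed
    then show "M'.supp U' \<subseteq> M'.dset (Lat h')" unfolding e dH' .
  qed
  have S'nH: "\<forall>U\<in>S'. U \<noteq> Lat h'"
  proof
    fix U' assume "U' \<in> S'"
    then obtain U where U: "U \<in> S" "U' = \<sigma>i U" unfolding S'_def by blast
    have UN: "U \<in> M.NN" using U SN by blast
    show "U' \<noteq> Lat h'"
    proof
      assume "U' = Lat h'"
      then have "U = \<sigma> (Lat h')" using U s_si[OF UN] by simp
      then have "U = Obs k" using s by simp
      then show False using U H1ne unfolding S_def by blast
    qed
  qed
  have S'PC: "S' \<subseteq> M'.PC (Lat h')" using M'.PC_char[OF H] S'N S'supp S'nH by blast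
  have sp': "TC_in_span q l' A' B' (Lat h') (M'.DE (Lat h')) S'"
    unfolding M'.DE_eq M'.span_iff S'_def using dd by blast
  have "card S' \<le> card (M'.CH (Lat h')) \<Longrightarrow> card S' = card (M'.CH (Lat h'))"
    using M'.faith_b1[OF H S'PC _ sp'] by simp
  then have c1: "card (M'.CH (Lat h')) \<le> card (M.CH H1)" using cS' by linarith
  have incl: "M.CH H1 \<subseteq> M'.CH (Lat h')" if cc: "card (M.CH H1) \<le> card (M'.CH (Lat h'))"
  proof
    have cle: "card S' \<le> card (M'.CH (Lat h'))" using cS' cc by simp
    fix c assume c: "c \<in> M.CH H1"
    then obtain j where j: "j < q" "c = Obs j" using M.Ch_sub by blast
    have cN: "c \<in> M.NN" using c M.Ch_N by blast
    show "c \<in> M'.CH (Lat h')"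
    proof (cases "c = Obs k")
      case True
      have U': "Obs k \<in> S'" unfolding S'_def S_def using siH1 by (metis insertI1 image_eqI)
      have ne: "M'.supp (Obs k) \<noteq> {}" and mn: "Min (M'.supp (Obs k)) = k"
        using M'.Min_supp_Obs'[OF kN2] by auto
      have "Obs (Min (M'.supp (Obs k))) \<in> M'.CH (Lat h')"
        by (rule M'.key_cover[OF H S'PC cle sp' U' ne])
      then show ?thesis using mn True by simp
    next
      case False
      have U': "\<sigma>i c \<in> S'" unfolding S'_def S_def using c False by blast
      have su: "M'.supp (\<sigma>i c) = M.supp (Obs j)" using supp_rel_i[OF cN] j by simp
      have jN: "Obs j \<in> M.NN" using j M.nodes_Obs_iff by simp
      have ne: "M'.supp (\<sigma>i c) \<noteq> {}" and mn: "Min (M'.supp (\<sigma>i c)) = j"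
        using su M.Min_supp_Obs'[OF jN] by auto
      have "Obs (Min (M'.supp (\<sigma>i c))) \<in> M'.CH (Lat h')"
        by (rule M'.key_cover[OF H S'PC cle sp' U' ne])
      then show ?thesis using mn j by simp
    qed
  qed
  have "is_latent (\<sigma> (Obs k))" using h1 H1_def by (simp add: is_latent_def)
  then show ?thesis using c1 incl H1_def by simp
qed

end


definition col :: "nat \<Rightarrow> node \<Rightarrow> nat" where
  "col L V = (case V of Lat i \<Rightarrow> i | Obs k \<Rightarrow> L + k)"
definition nd :: "nat \<Rightarrow> nat \<Rightarrow> node" where
  "nd L c = (if c < L then Lat c else Obs (c - L))"

lemma bij_col: "bij_betw (col L) (nodes q L) {..<L+q}"
proof (rule bij_betw_byWitness[where f' = "nd L"])
  show "\<forall>a\<in>nodes q L. nd L (col L a) = a" by (auto simp: nodes_def col_def nd_def)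
  show "\<forall>a'\<in>{..<L+q}. col L (nd L a') = a'" by (auto simp: col_def nd_def)
  show "col L ` nodes q L \<subseteq> {..<L+q}" by (auto simp: nodes_def col_def)
  show "nd L ` {..<L+q} \<subseteq> nodes q L" by (auto simp: nodes_def nd_def)
qed

lemma bij_nd: "bij_betw (nd L) {..<L+q} (nodes q L)"
proof (rule bij_betw_byWitness[where f' = "col L"])
  show "\<forall>a\<in>{..<L+q}. col L (nd L a) = a" by (auto simp: col_def nd_def)
  show "\<forall>a'\<in>nodes q L. nd L (col L a') = a'" by (auto simp: nodes_def col_def nd_def)
  show "nd L ` {..<L+q} \<subseteq> nodes q L" by (auto simp: nodes_def nd_def)
  show "col L ` nodes q L \<subseteq> {..<L+q}" by (auto simp: nodes_def col_def)
qed

lemma card_nodes: "card (nodes q L) = L + q"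
  using bij_betw_same_card[OF bij_col[of L q]] by simp

context model begin
lemma E_iff: "(u,v) \<in> EE \<longleftrightarrow> u \<in> NN \<and> v \<in> CH u"
  using E_nodes unfolding children_def by blast
end

context two begin

lemma main:
  "\<exists>\<pi>. bij_betw \<pi> {..<l'} {..<l} \<and>
       (\<lambda>(u, v). (relabel \<pi> u, relabel \<pi> v)) ` edges q l' A' B' = edges q l A B"
proof -
  interpret R: two q l' l A' B' A B \<sigma>i "(\<lambda>V. 1 / \<kappa> (\<sigma>i V))" by (rule two_rev)
  have ll: "l' = l"
  proof -
    have "card (nodes q l') = card (nodes q l)" by (rule bij_betw_same_card[OF bij])
    then show ?thesis using card_nodes by simp
  qed
  have obs: "M.CH (Obs k) = M'.CH (Obs k)" if k: "k < q" for k
  proof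
    have T1: "card (M.CH (Obs k)) \<le> card (M'.CH (Obs k))" using card_obs[OF k] by simp
    have R1: "card (M'.CH (Obs k)) \<le> card (M.CH (Obs k))" using R.card_obs[OF k] by simp
    show "M.CH (Obs k) \<subseteq> M'.CH (Obs k)" by (rule incl_obs[OF k R1])
    show "M'.CH (Obs k) \<subseteq> M.CH (Obs k)" by (rule R.incl_obs[OF k T1])
  qed
  define \<pi>' where "\<pi>' H = (if is_latent (\<sigma> H) then \<sigma> H else \<sigma> (\<sigma> H))" for H
  have lat: "\<exists>h<l. \<pi>' (Lat h') = Lat h \<and> M.CH (Lat h) = M'.CH (Lat h')" if h': "h' < l'" for h'
  proof -
    have H: "Lat h' \<in> M'.NN" using h' M'.nodes_Lat by simp
    have sH: "\<sigma> (Lat h') \<in> M.NN" by (rule sN[OF H])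
    show ?thesis
    proof (cases "\<sigma> (Lat h')")
      case (Lat h)
      have hl: "h < l" using sH unfolding Lat by (simp only: M.nodes_Lat)
      have p: "\<pi>' (Lat h') = Lat h" unfolding \<pi>'_def using Lat by (simp add: is_latent_def)
      have i1: "M.CH (Lat h) \<subseteq> M'.CH (Lat h')" using lat_nonswap[OF H Lat] by simp
      have HN: "Lat h \<in> M.NN" using sH unfolding Lat .
      have si: "\<sigma>i (Lat h) = Lat h'" using si_s[OF H] unfolding Lat .
      have i2: "M'.CH (Lat h') \<subseteq> M.CH (Lat h)" using R.lat_nonswap[OF HN si] by simp
      show ?thesis using hl p i1 i2 by blast
    next
      case (Obs k)
      have kN2: "Obs k \<in> M'.NN"
      proof -
        have "k < q" using sH unfolding Obs by (simp only: M.nodes_Obs_iff)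
        then show ?thesis by (simp add: M'.nodes_Obs_iff)
      qed
      have T: "is_latent (\<sigma> (Obs k)) \<and> card (M'.CH (Lat h')) \<le> card (M.CH (\<sigma> (Obs k))) \<and>
         (card (M.CH (\<sigma> (Obs k))) \<le> card (M'.CH (Lat h')) \<longrightarrow> M.CH (\<sigma> (Obs k)) \<subseteq> M'.CH (Lat h'))"
        by (rule lat_swap[OF H Obs])
      then obtain h1 where h1: "\<sigma> (Obs k) = Lat h1" by (auto simp: is_latent_def)
      have p: "\<pi>' (Lat h') = Lat h1" unfolding \<pi>'_def using Obs h1 by (simp add: is_latent_def)
      have H1N: "Lat h1 \<in> M.NN" using sN[OF kN2] unfolding h1 .
      have h1l: "h1 < l" using H1N by (simp only: M.nodes_Lat)
      have si1: "\<sigma>i (Lat h1) = Obs k" using si_s[OF kN2] unfolding h1 .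
      have si2: "\<sigma>i (Obs k) = Lat h'" using si_s[OF H] unfolding Obs .
      have R2: "is_latent (\<sigma>i (Obs k)) \<and> card (M.CH (Lat h1)) \<le> card (M'.CH (\<sigma>i (Obs k))) \<and>
         (card (M'.CH (\<sigma>i (Obs k))) \<le> card (M.CH (Lat h1)) \<longrightarrow> M'.CH (\<sigma>i (Obs k)) \<subseteq> M.CH (Lat h1))"
        by (rule R.lat_swap[OF H1N si1])
      have "card (M'.CH (Lat h')) \<le> card (M.CH (Lat h1))" using T h1 by simp
      moreover have "card (M.CH (Lat h1)) \<le> card (M'.CH (Lat h'))" using R2 si2 by simp
      ultimately have "M.CH (Lat h1) \<subseteq> M'.CH (Lat h')" "M'.CH (Lat h') \<subseteq> M.CH (Lat h1)"
        using T R2 h1 si2 by simp_all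
      then show ?thesis using h1l p by blast
    qed
  qed
  define \<pi> where "\<pi> h' = (SOME h. h < l \<and> \<pi>' (Lat h') = Lat h \<and> M.CH (Lat h) = M'.CH (Lat h'))" for h'
  have \<pi>: "\<pi> h' < l \<and> \<pi>' (Lat h') = Lat (\<pi> h') \<and> M.CH (Lat (\<pi> h')) = M'.CH (Lat h')" if h': "h' < l'" for h'
    unfolding \<pi>_def by (rule someI_ex) (use lat[OF h'] in blast)
  have inj: "inj_on \<pi> {..<l'}"
  proof (rule inj_onI)
    fix a b assume a: "a \<in> {..<l'}" and b: "b \<in> {..<l'}" and e: "\<pi> a = \<pi> b"
    have aN: "Lat a \<in> M'.NN" and bN: "Lat b \<in> M'.NN" using a b M'.nodes_Lat by auto
    have pe: "\<pi>' (Lat a) = \<pi>' (Lat b)" using \<pi> a b e by auto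
    define G where "G H = (if is_latent (\<sigma> H) then H else \<sigma> H)" for H
    have Gp: "\<pi>' H = \<sigma> (G H)" for H unfolding \<pi>'_def G_def by simp
    have GN: "G H \<in> M'.NN" if HN: "H \<in> M'.NN" for H
    proof (cases "is_latent (\<sigma> H)")
      case True then show ?thesis using HN by (simp add: G_def)
    next
      case False
      then obtain k where k: "\<sigma> H = Obs k" by (cases "\<sigma> H") (auto simp: is_latent_def)
      have "k < q" using sN[OF HN] unfolding k by (simp only: M.nodes_Obs_iff)
      then show ?thesis using False k by (simp add: G_def M'.nodes_Obs_iff)
    qed
    have Ge: "G (Lat a) = G (Lat b)" using s_inj[OF GN[OF aN] GN[OF bN]] pe Gp by simp
    show "a = b"
    proof (cases "is_latent (\<sigma> (Lat a))"; cases "is_latent (\<sigma> (Lat b))")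
      assume "is_latent (\<sigma> (Lat a))" "is_latent (\<sigma> (Lat b))"
      then show ?thesis using Ge by (simp add: G_def)
    next
      assume A1: "is_latent (\<sigma> (Lat a))" "\<not> is_latent (\<sigma> (Lat b))"
      then have e2: "Lat a = \<sigma> (Lat b)" using Ge by (simp add: G_def)
      have "is_latent (\<sigma> (Lat b))" unfolding e2[symmetric] by (simp add: is_latent_def)
      then show ?thesis using A1(2) by blast
    next
      assume A1: "\<not> is_latent (\<sigma> (Lat a))" "is_latent (\<sigma> (Lat b))"
      then have e2: "\<sigma> (Lat a) = Lat b" using Ge by (simp add: G_def)
      have "is_latent (\<sigma> (Lat a))" unfolding e2 by (simp add: is_latent_def)
      then show ?thesis using A1(1) by blast
    next
      assume "\<not> is_latent (\<sigma> (Lat a))" "\<not> is_latent (\<sigma> (Lat b))"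
      then have "\<sigma> (Lat a) = \<sigma> (Lat b)" using Ge by (simp add: G_def)
      then show ?thesis using s_inj[OF aN bN] by simp
    qed
  qed
  have img: "\<pi> ` {..<l'} = {..<l}"
  proof (rule card_subset_eq)
    show "finite {..<l}" by simp
    show "\<pi> ` {..<l'} \<subseteq> {..<l}" using \<pi> by auto
    show "card (\<pi> ` {..<l'}) = card {..<l}" using card_image[OF inj] ll by simp
  qed
  have bijp: "bij_betw \<pi> {..<l'} {..<l}" unfolding bij_betw_def using inj img by simp
  have E: "(\<lambda>(u, v). (relabel \<pi> u, relabel \<pi> v)) ` M'.EE = M.EE"
  proof (rule Set.set_eqI, rule iffI)
    fix x assume "x \<in> (\<lambda>(u, v). (relabel \<pi> u, relabel \<pi> v)) ` M'.EE"
    then obtain u v where uv: "(u,v) \<in> M'.EE" "x = (relabel \<pi> u, relabel \<pi> v)" by auto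
    have uN: "u \<in> M'.NN" and vC: "v \<in> M'.CH u" using uv(1) M'.E_iff by auto
    obtain j where vj: "v = Obs j" using vC M'.Ch_sub by blast
    show "x \<in> M.EE"
    proof (cases u)
      case (Lat h')
      have h': "h' < l'" using uN Lat M'.nodes_Lat by simp
      have "v \<in> M.CH (Lat (\<pi> h'))" using \<pi>[OF h'] vC Lat by simp
      moreover have "Lat (\<pi> h') \<in> M.NN" using \<pi>[OF h'] M.nodes_Lat by simp
      ultimately show ?thesis using uv(2) Lat vj M.E_iff by simp
    next
      case (Obs k)
      have k: "k < q" using uN Obs M'.nodes_Obs_iff by simp
      have "v \<in> M.CH (Obs k)" using obs[OF k] vC Obs by simp
      moreover have "Obs k \<in> M.NN" using k M.nodes_Obs_iff by simp
      ultimately show ?thesis using uv(2) Obs vj M.E_iff by simp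
    qed
  next
    fix x assume "x \<in> M.EE"
    then obtain u v where uv: "(u,v) \<in> M.EE" "x = (u, v)" by (cases x) auto
    have uN: "u \<in> M.NN" and vC: "v \<in> M.CH u" using uv(1) M.E_iff by auto
    obtain j where vj: "v = Obs j" using vC M.Ch_sub by blast
    show "x \<in> (\<lambda>(u, v). (relabel \<pi> u, relabel \<pi> v)) ` M'.EE"
    proof (cases u)
      case (Lat h)
      have hl: "h < l" using uN Lat M.nodes_Lat by simp
      then obtain h' where h': "h' < l'" "\<pi> h' = h" using img by (metis imageE lessThan_iff)
      have "v \<in> M'.CH (Lat h')" using \<pi>[OF h'(1)] h'(2) vC Lat by simp
      moreover have "Lat h' \<in> M'.NN" using h'(1) M'.nodes_Lat by simp
      ultimately have "(Lat h', v) \<in> M'.EE" using M'.E_iff by simp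
      moreover have "x = (relabel \<pi> (Lat h'), relabel \<pi> v)" using uv(2) Lat vj h'(2) by simp
      ultimately show ?thesis by (auto intro: rev_image_eqI)
    next
      case (Obs k)
      have k: "k < q" using uN Obs M.nodes_Obs_iff by simp
      have "v \<in> M'.CH (Obs k)" using obs[OF k] vC Obs by simp
      moreover have "Obs k \<in> M'.NN" using k M'.nodes_Obs_iff by simp
      ultimately have "(Obs k, v) \<in> M'.EE" using M'.E_iff by simp
      moreover have "x = (relabel \<pi> (Obs k), relabel \<pi> v)" using uv(2) Obs vj by simp
      ultimately show ?thesis by (auto intro: rev_image_eqI)
    qed
  qed
  show ?thesis using bijp E by blast
qed

end

theorem corollary3:
  fixes q l l' :: nat and A B A' B' :: "real mat"
  assumes "sem_ur q l A B"
    and "sem_ur_faithful q l A B"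
    and "sem_ur q l' A' B'"
    and "sem_ur_faithful q l' A' B'"
    and "equal_up_to_perm_scaling (mixing_matrix q l' A' B') (mixing_matrix q l A B)"
  shows "\<exists>\<pi>. bij_betw \<pi> {..<l'} {..<l} \<and>
           (\<lambda>(u, v). (relabel \<pi> u, relabel \<pi> v)) ` edges q l' A' B' = edges q l A B"
proof -
  interpret M: model q l A B by (rule model.intro[OF assms(1,2)])
  interpret M': model q l' A' B' by (rule model.intro[OF assms(3,4)])
  have dc: "dim_col (mixing_matrix q L AA BB) = L + q" and dr: "dim_row (mixing_matrix q L AA BB) = q"
    for L AA BB by (simp_all add: mixing_matrix_def Let_def)
  from assms(5) obtain \<sigma>c c where
    sc: "bij_betw \<sigma>c {..<l'+q} {..<l+q}" and c0: "\<forall>k<l'+q. c k \<noteq> (0::real)"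
    and W: "\<forall>j<q. \<forall>k<l'+q. mixing_matrix q l' A' B' $$ (j, k) = c k * mixing_matrix q l A B $$ (j, \<sigma>c k)"
    unfolding equal_up_to_perm_scaling_def dc dr by blast
  define \<sigma> where "\<sigma> V = nd l (\<sigma>c (col l' V))" for V
  define \<kappa> where "\<kappa> V = c (col l' V)" for V
  have bij: "bij_betw \<sigma> (nodes q l') (nodes q l)"
    unfolding \<sigma>_def using bij_betw_trans[OF bij_betw_trans[OF bij_col sc] bij_nd]
    by (simp add: comp_def)
  have colb: "col l' V < l' + q" if "V \<in> nodes q l'" for V
    using bij_betw_apply[OF bij_col that] by simp
  have ndc: "nd l' (col l' V) = V" if "V \<in> nodes q l'" for V
    using that by (auto simp: nodes_def col_def nd_def)
  have kap: "\<kappa> V \<noteq> 0" if "V \<in> nodes q l'" for V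
    unfolding \<kappa>_def using c0 colb[OF that] by blast
  have rel: "total_effect q l' A' B' V (Obs j) = \<kappa> V * total_effect q l A B (\<sigma> V) (Obs j)"
    if V: "V \<in> nodes q l'" and j: "j < q" for V j
  proof -
    have cb: "\<sigma>c (col l' V) < l + q" using bij_betw_apply[OF sc] colb[OF V] by simp
    have "total_effect q l' A' B' V (Obs j) = mixing_matrix q l' A' B' $$ (j, col l' V)"
      using M'.mix[OF j colb[OF V]] ndc[OF V] by (simp add: nd_def)
    also have "\<dots> = c (col l' V) * mixing_matrix q l A B $$ (j, \<sigma>c (col l' V))"
      using W j colb[OF V] by blast
    also have "mixing_matrix q l A B $$ (j, \<sigma>c (col l' V)) = total_effect q l A B (\<sigma> V) (Obs j)"
      using M.mix[OF j cb] by (simp add: \<sigma>_def nd_def)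
    finally show ?thesis unfolding \<kappa>_def .
  qed
  interpret T: two q l l' A B A' B' \<sigma> \<kappa>
    by (rule two.intro[OF model.intro[OF assms(1,2)] model.intro[OF assms(3,4)] two_axioms.intro[OF bij kap rel]])
  show ?thesis by (rule T.main)
qed


end
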